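(* Let $N=N(n)\le n$ with $n\to\infty$ and $N/n\to c\in(0,1]$. Let $D>0$, let $\varphi_1,\dots,\varphi_r\in[0,\pi/D]$ be pairwise distinct, $b_n(\varphi)=N^{-1/2}[\exp(-\imath D\ell\varphi)]_{\ell=0}^{N-1}$, $B=[b_n(\varphi_1),\dots,b_n(\varphi_r)]$, $B'=[b_n'(\varphi_1),\dots,b_n'(\varphi_r)]$, $B''=[b_n''(\varphi_1),\dots,b_n''(\varphi_r)]$ (derivatives in $\varphi$), and let $B^\perp$ be the $N\times r$ matrix defined by $\frac1nB'=-\frac{\imath cD}{2}B+\frac{cD}{2\sqrt3}B^\perp$. Let $P_n=BS_n^*$ where $S_n$ is a deterministic $n\times r$ matrix with $\sqrt n(S_n^*S_n-O^2)=\mathcal O(1)$, $O=\operatorname{diag}(\omega_1I_{j_1},\dots,\omega_sI_{j_s})$, $\omega_1>\dots>\omega_s>0$, $\sum j_i=r$, and assume $P_n$ has rank $r$ for $n$ large with SVD $P_n=U_n\Omega_nV_n^*$, $U_n=[u_{1,n},\dots,u_{r,n}]$, $\Omega_n=\operatorname{diag}(\omega_{1,n}\ge\dots\ge\omega_{r,n})\to O$. Write $B=[B_1,\dots,B_s]$ with $B_i$ having $j_i$ columns, let $\Pi_{B_i}$ be the orthogonal projector onto the column space of $B_i$, and $\Pi_i=\sum_{k:\,j_1+\dots+j_{i-1}<k\le j_1+\dots+j_i}u_{k,n}u_{k,n}^*$. Then as $n\to\infty$: $B^*B\to I_r$; $\ n^{-2}B^*B''\to-\frac{c^2D^2}{3}I_r$;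 $\ (B^\perp)^*B^\perp\to I_r$; $\ (B^\perp)^*B\to0$; and $\|\Pi_i-\Pi_{B_i}\|\to0$ for all $i=1,\dots,s$.
   Context: $\|\cdot\|$ is the spectral norm. *)

theory Defs
  imports "HOL-Analysis.Derivative" "Jordan_Normal_Form.Schur_Decomposition"
begin

text \<open>All indices are 0-based. Matrices are Jordan_Normal_Form matrices over complex.\<close>

definition bent :: "nat \<Rightarrow> real \<Rightarrow> nat \<Rightarrow> real \<Rightarrow> complex" where
  "bent N D l t = exp (- \<i> * complex_of_real (D * real l * t)) / complex_of_real (sqrt (real N))"

definition Bmat :: "nat \<Rightarrow> real \<Rightarrow> nat \<Rightarrow> (nat \<Rightarrow> real) \<Rightarrow> complex mat" where
  "Bmat N D r phi = mat N r (\<lambda>(l,k). bent N D l (phi k))"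

definition Bmat' :: "nat \<Rightarrow> real \<Rightarrow> nat \<Rightarrow> (nat \<Rightarrow> real) \<Rightarrow> complex mat" where
  "Bmat' N D r phi = mat N r (\<lambda>(l,k). vector_derivative (bent N D l) (at (phi k)))"

definition Bmat'' :: "nat \<Rightarrow> real \<Rightarrow> nat \<Rightarrow> (nat \<Rightarrow> real) \<Rightarrow> complex mat" where
  "Bmat'' N D r phi = mat N r (\<lambda>(l,k).
      vector_derivative (\<lambda>t. vector_derivative (bent N D l) (at t)) (at (phi k)))"

text \<open>B^perp, defined by (1/n) B' = -(i c D/2) B + (c D/(2 sqrt 3)) B^perp.\<close>
definition Bperp :: "nat \<Rightarrow> nat \<Rightarrow> real \<Rightarrow> real \<Rightarrow> nat \<Rightarrow> (nat \<Rightarrow> real) \<Rightarrow> complex mat" where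
  "Bperp n N c D r phi =
     complex_of_real (2 * sqrt 3 / (c * D)) \<cdot>\<^sub>m
       (complex_of_real (1 / real n) \<cdot>\<^sub>m Bmat' N D r phi
        + (\<i> * complex_of_real (c * D / 2)) \<cdot>\<^sub>m Bmat N D r phi)"

definition blk_start :: "(nat \<Rightarrow> nat) \<Rightarrow> nat \<Rightarrow> nat" where
  "blk_start j i = (\<Sum>l<i. j l)"

text \<open>Diagonal entry k of O = diag(omega_0 I_(j_0), ..., omega_(s-1) I_(j_(s-1))).\<close>
definition Odiag :: "nat \<Rightarrow> (nat \<Rightarrow> nat) \<Rightarrow> (nat \<Rightarrow> real) \<Rightarrow> nat \<Rightarrow> real" where
  "Odiag s j \<omega> k = \<omega> (THE i. i < s \<and> blk_start j i \<le> k \<and> k < blk_start j (Suc i))"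

definition Omat :: "nat \<Rightarrow> nat \<Rightarrow> (nat \<Rightarrow> nat) \<Rightarrow> (nat \<Rightarrow> real) \<Rightarrow> complex mat" where
  "Omat r s j \<omega> = mat_diag r (\<lambda>k. complex_of_real (Odiag s j \<omega> k))"

definition col_block :: "complex mat \<Rightarrow> (nat \<Rightarrow> nat) \<Rightarrow> nat \<Rightarrow> complex mat" where
  "col_block M j i = mat (dim_row M) (j i) (\<lambda>(l,k). M $$ (l, blk_start j i + k))"

definition cinner :: "complex vec \<Rightarrow> complex vec \<Rightarrow> complex" where
  "cinner x y = (\<Sum>i<dim_vec x. x $ i * cnj (y $ i))"

definition vnorm :: "complex vec \<Rightarrow> real" where
  "vnorm x = sqrt (\<Sum>i<dim_vec x. (cmod (x $ i))\<^sup>2)"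

definition spec_norm :: "complex mat \<Rightarrow> real" where
  "spec_norm A = Sup {vnorm (A *\<^sub>v x) | x. x \<in> carrier_vec (dim_col A) \<and> vnorm x = 1}"

definition colspace :: "complex mat \<Rightarrow> complex vec set" where
  "colspace M = {M *\<^sub>v y | y. y \<in> carrier_vec (dim_col M)}"

definition is_orth_proj :: "complex mat \<Rightarrow> complex vec set \<Rightarrow> nat \<Rightarrow> bool" where
  "is_orth_proj P W m \<longleftrightarrow> P \<in> carrier_mat m m \<and>
     (\<forall>x \<in> carrier_vec m. P *\<^sub>v x \<in> W \<and> (\<forall>w \<in> W. cinner (x - P *\<^sub>v x) w = 0))"

definition proj_colspace :: "complex mat \<Rightarrow> complex mat" where
  "proj_colspace M = (THE P. is_orth_proj P (colspace M) (dim_row M))"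

definition Pi_blk :: "complex mat \<Rightarrow> (nat \<Rightarrow> nat) \<Rightarrow> nat \<Rightarrow> complex mat" where
  "Pi_blk U j i = mat (dim_row U) (dim_row U)
     (\<lambda>(a,b). \<Sum>k\<in>{blk_start j i..<blk_start j (Suc i)}. U $$ (a,k) * cnj (U $$ (b,k)))"

end

theory Submission
  imports Defs "HOL-Analysis.Analysis"
begin

no_notation vec_nth (infixl "$" 90)


lemma geo_id: "(1 - z) * (\<Sum>l<N. z^l) = 1 - (z::complex)^N"
proof (induction N)
  case (Suc N)
  have "(1 - z) * (\<Sum>l<Suc N. z^l) = (1 - z) * (\<Sum>l<N. z^l) + (1 - z) * z^N" by (simp add: distrib_left)
  also have "\<dots> = 1 - z^Suc N" unfolding Suc.IH by (simp add: algebra_simps)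
  finally show ?case .
qed simp

lemma lin_id: "(1 - z) * (\<Sum>l<N. of_nat l * z^l) = (\<Sum>l<N. z^(Suc l)) - of_nat N * (z::complex)^N"
proof (induction N)
  case (Suc N)
  have "(1 - z) * (\<Sum>l<Suc N. of_nat l * z^l) = (1 - z) * (\<Sum>l<N. of_nat l * z^l) + (1 - z) * (of_nat N * z^N)" by (simp add: distrib_left)
  also have "\<dots> = (\<Sum>l<Suc N. z^(Suc l)) - of_nat (Suc N) * z^Suc N" unfolding Suc.IH by (simp add: algebra_simps)
  finally show ?case .
qed simp

lemma sq_id: "(1 - z) * (\<Sum>l<N. (of_nat l)^2 * z^l) = (\<Sum>l<N. (2 * of_nat l + 1) * z^(Suc l)) - (of_nat N)^2 * (z::complex)^N"
proof (induction N)
  case (Suc N)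
  have "(1 - z) * (\<Sum>l<Suc N. (of_nat l)^2 * z^l) = (1 - z) * (\<Sum>l<N. (of_nat l)^2 * z^l) + (1 - z) * ((of_nat N)^2 * z^N)" by (simp add: distrib_left)
  also have "\<dots> = (\<Sum>l<Suc N. (2 * of_nat l + 1) * z^(Suc l)) - (of_nat (Suc N))^2 * z^Suc N" unfolding Suc.IH by (simp add: algebra_simps power2_eq_square)
  finally show ?case .
qed simp

lemma sum_l: "2 * (\<Sum>l<N. real l) = real N * (real N - 1)"
  by (induction N) (auto simp: algebra_simps)

lemma sum_l2: "6 * (\<Sum>l<N. (real l)^2) = real N * (real N - 1) * (2 * real N - 1)"
  by (induction N) (auto simp: algebra_simps power2_eq_square)

lemma sum_2l1: "(\<Sum>l<N. 2 * real l + 1) = (real N)^2"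
  by (induction N) (auto simp: algebra_simps power2_eq_square)

lemma bound0: assumes "cmod z = 1" "z \<noteq> 1"
  shows "cmod (\<Sum>l<N. z^l) \<le> 2 / cmod (1 - z)"
proof -
  have p: "0 < cmod (1 - z)" using assms by auto
  have "cmod (1 - z) * cmod (\<Sum>l<N. z^l) = cmod (1 - z^N)"
    by (subst geo_id[symmetric]) (simp add: norm_mult)
  also have "\<dots> \<le> 2" using norm_triangle_ineq4[of 1 "z^N"] assms by (simp add: norm_power)
  finally show ?thesis using p by (simp add: field_simps mult.commute)
qed

lemma bound1: assumes "cmod z = 1" "z \<noteq> 1"
  shows "cmod (\<Sum>l<N. of_nat l * z^l) \<le> 2 * real N / cmod (1 - z)"
proof -
  have p: "0 < cmod (1 - z)" using assms by auto
  have "cmod (1 - z) * cmod (\<Sum>l<N. of_nat l * z^l) = cmod ((\<Sum>l<N. z^(Suc l)) - of_nat N * z^N)"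
    by (subst lin_id[symmetric]) (simp add: norm_mult)
  also have "\<dots> \<le> cmod (\<Sum>l<N. z^(Suc l)) + cmod (of_nat N * z^N)" by (rule norm_triangle_ineq4)
  also have "cmod (\<Sum>l<N. z^(Suc l)) \<le> (\<Sum>l<N. cmod (z^(Suc l)))" by (rule norm_sum)
  also have "(\<Sum>l<N. cmod (z^(Suc l))) = real N" using assms by (simp only: norm_power) simp
  also have "cmod (of_nat N * z^N) = real N" using assms by (simp add: norm_mult norm_power)
  finally show ?thesis using p by (simp add: field_simps mult.commute)
qed

lemma bound2: assumes "cmod z = 1" "z \<noteq> 1"
  shows "cmod (\<Sum>l<N. (of_nat l)^2 * z^l) \<le> 2 * (real N)^2 / cmod (1 - z)"
proof -
  have p: "0 < cmod (1 - z)" using assms by auto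
  have "cmod (1 - z) * cmod (\<Sum>l<N. (of_nat l)^2 * z^l) = cmod ((\<Sum>l<N. (2 * of_nat l + 1) * z^(Suc l)) - (of_nat N)^2 * z^N)"
    by (subst sq_id[symmetric]) (simp add: norm_mult)
  also have "\<dots> \<le> cmod (\<Sum>l<N. (2 * of_nat l + 1) * z^(Suc l)) + cmod ((of_nat N)^2 * z^N)" by (rule norm_triangle_ineq4)
  also have "cmod (\<Sum>l<N. (2 * of_nat l + 1) * z^(Suc l)) \<le> (\<Sum>l<N. cmod ((2 * of_nat l + 1) * z^(Suc l)))" by (rule norm_sum)
  also have "(\<Sum>l<N. cmod ((2 * of_nat l + 1) * z^(Suc l))) = (\<Sum>l<N. 2 * real l + 1)"
  proof (rule sum.cong)
    fix l assume "l \<in> {..<N}"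
    have "(2 * of_nat l + 1 :: complex) = of_nat (2 * l + 1)" by simp
    then have "cmod (2 * of_nat l + 1 :: complex) = 2 * real l + 1" by (simp only: norm_of_nat)
    then show "cmod ((2 * of_nat l + 1) * z^(Suc l)) = 2 * real l + 1"
      using assms by (simp add: norm_mult norm_power)
  qed simp
  also have "\<dots> = (real N)^2" by (rule sum_2l1)
  also have "cmod ((of_nat N)^2 * z^N) = (real N)^2" using assms by (simp add: norm_mult norm_power)
  finally show ?thesis using p by (simp add: field_simps mult.commute)
qed

lemma bent_deriv: "(bent N D l has_vector_derivative (- \<i> * of_real (D * real l)) * bent N D l t) (at t)"
proof -
  have "((\<lambda>w. exp (- \<i> * of_real (D * real l) * w) * inverse (of_real (sqrt (real N)))) has_field_derivative
        (- \<i> * of_real (D * real l)) * (exp (- \<i> * of_real (D * real l) * of_real t) * inverse (of_real (sqrt (real N))))) (at (of_real t))"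
    by (auto intro!: derivative_eq_intros)
  from has_vector_derivative_real_field[OF this]
  show ?thesis unfolding bent_def by (simp add: mult.assoc divide_inverse)
qed

lemma bent_vd: "vector_derivative (bent N D l) (at t) = (- \<i> * of_real (D * real l)) * bent N D l t"
  by (rule vector_derivative_at[OF bent_deriv])

lemma bent_vd2: "vector_derivative (\<lambda>t. vector_derivative (bent N D l) (at t)) (at t) = - of_real ((D * real l)^2) * bent N D l t"
proof -
  have "((\<lambda>t. vector_derivative (bent N D l) (at t)) has_vector_derivative
      (- \<i> * of_real (D * real l)) * ((- \<i> * of_real (D * real l)) * bent N D l t)) (at t)"
    unfolding bent_vd by (intro has_vector_derivative_mult_right bent_deriv)
  from vector_derivative_at[OF this] show ?thesis by (simp add: power2_eq_square algebra_simps)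
qed

lemma bent_prod: "cnj (bent N D l x) * bent N D l y = exp (\<i> * of_real (D * (x - y))) ^ l / of_nat N"
proof -
  have "cnj (bent N D l x) * bent N D l y = exp (\<i> * of_real (D * real l * x)) * exp (- \<i> * of_real (D * real l * y)) / (of_real (sqrt (real N)))^2"
    unfolding bent_def by (simp add: power2_eq_square exp_cnj)
  also have "exp (\<i> * of_real (D * real l * x)) * exp (- \<i> * of_real (D * real l * y)) = exp (of_nat l * (\<i> * of_real (D * (x - y))))"
    by (simp add: exp_add[symmetric] algebra_simps)
  also have "(of_real (sqrt (real N)) :: complex)^2 = of_nat N"
    by (simp flip: of_real_power)
  finally show ?thesis by (simp add: exp_of_nat_mult)
qed

lemma adj_dims[simp]: "dim_row (mat_adjoint A) = dim_col A" "dim_col (mat_adjoint A) = dim_row A"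
  unfolding mat_adjoint_def by simp_all

lemma adj_index[simp]: "i < dim_col A \<Longrightarrow> j < dim_row A \<Longrightarrow> mat_adjoint A $$ (i,j) = cnj (A $$ (j,i))"
  unfolding mat_adjoint_def by (simp add: mat_of_rows_def)

lemma mult_entry: "a < dim_row X \<Longrightarrow> b < dim_col Y \<Longrightarrow> dim_col X = dim_row Y \<Longrightarrow>
   (X * Y) $$ (a,b) = (\<Sum>l<dim_col X. X $$ (a,l) * Y $$ (l,b))"
proof -
  assume h: "a < dim_row X" "b < dim_col Y" "dim_col X = dim_row Y"
  have "(X*Y) $$ (a,b) = row X a \<bullet> col Y b" using h by simp
  also have "\<dots> = (\<Sum>l<dim_row Y. row X a $ l * col Y b $ l)" by (simp add: scalar_prod_def atLeast0LessThan)
  also have "\<dots> = (\<Sum>l<dim_col X. X $$ (a,l) * Y $$ (l,b))" using h by (intro sum.cong) auto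
  finally show ?thesis .
qed

lemma adj_mult_entry: "a < dim_col X \<Longrightarrow> b < dim_col Y \<Longrightarrow> dim_row X = dim_row Y \<Longrightarrow>
   (mat_adjoint X * Y) $$ (a,b) = (\<Sum>l<dim_row X. cnj (X $$ (l,a)) * Y $$ (l,b))"
  by (subst mult_entry) (auto intro!: sum.cong)

definition zz :: "real \<Rightarrow> (nat \<Rightarrow> real) \<Rightarrow> nat \<Rightarrow> nat \<Rightarrow> complex" where
  "zz D phi a b = exp (\<i> * of_real (D * (phi a - phi b)))"

lemma Bmat_dims[simp]: "dim_row (Bmat N D r phi) = N" "dim_col (Bmat N D r phi) = r"
  "dim_row (Bmat' N D r phi) = N" "dim_col (Bmat' N D r phi) = r"
  "dim_row (Bmat'' N D r phi) = N" "dim_col (Bmat'' N D r phi) = r"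
  "dim_row (Bperp n N c D r phi) = N" "dim_col (Bperp n N c D r phi) = r"
  by (simp_all add: Bmat_def Bmat'_def Bmat''_def Bperp_def)

lemma Bmat_index[simp]: "l < N \<Longrightarrow> k < r \<Longrightarrow> Bmat N D r phi $$ (l,k) = bent N D l (phi k)"
  by (simp add: Bmat_def)

lemma Bmat''_index[simp]: "l < N \<Longrightarrow> k < r \<Longrightarrow> Bmat'' N D r phi $$ (l,k) = - of_real ((D * real l)^2) * bent N D l (phi k)"
  by (simp add: Bmat''_def bent_vd2)

lemma Bperp_index[simp]: assumes "c \<noteq> 0" "D \<noteq> 0" "l < N" "k < r"
  shows "Bperp n N c D r phi $$ (l,k) = \<i> * of_real (2 * sqrt 3 / c * (c / 2 - real l / real n)) * bent N D l (phi k)"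
proof -
  have "Bperp n N c D r phi $$ (l,k) = of_real (2 * sqrt 3 / (c * D)) * (of_real (1 / real n) * ((- \<i> * of_real (D * real l)) * bent N D l (phi k)) + (\<i> * of_real (c * D / 2)) * bent N D l (phi k))"
    using assms by (simp add: Bperp_def Bmat'_def Bmat_def bent_vd)
  also have "\<dots> = \<i> * of_real (2 * sqrt 3 / (c * D) * (c * D / 2 - D * real l / real n)) * bent N D l (phi k)"
    by (simp add: algebra_simps)
  also have "2 * sqrt 3 / (c * D) * (c * D / 2 - D * real l / real n) = 2 * sqrt 3 / c * (c / 2 - real l / real n)"
    using assms by (simp add: field_simps)
  finally show ?thesis .
qed

definition A0 :: "complex \<Rightarrow> nat \<Rightarrow> complex" where "A0 z N = (\<Sum>l<N. z^l) / of_nat N"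
definition A1 :: "complex \<Rightarrow> nat \<Rightarrow> nat \<Rightarrow> complex" where "A1 z n N = (\<Sum>l<N. of_nat l * z^l) / (of_nat n * of_nat N)"
definition A2 :: "complex \<Rightarrow> nat \<Rightarrow> nat \<Rightarrow> complex" where "A2 z n N = (\<Sum>l<N. (of_nat l)^2 * z^l) / ((of_nat n)^2 * of_nat N)"

lemma A0_alt: "A0 z N = (\<Sum>l<N. z^l / of_nat N)" by (simp add: A0_def sum_divide_distrib)
lemma A1_alt: "A1 z n N = (\<Sum>l<N. of_nat l * z^l / (of_nat n * of_nat N))" by (simp add: A1_def sum_divide_distrib)
lemma A2_alt: "A2 z n N = (\<Sum>l<N. (of_nat l)^2 * z^l / ((of_nat n)^2 * of_nat N))" by (simp add: A2_def sum_divide_distrib)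

lemma lin2: "(\<Sum>l<N. \<alpha> * u l + \<beta> * v l) = \<alpha> * (\<Sum>l<N. u l) + \<beta> * (\<Sum>l<N. v l :: complex)"
  by (simp add: sum.distrib sum_distrib_left)
lemma lin3: "(\<Sum>l<N. \<alpha> * u l + \<beta> * v l + \<gamma> * w l) = \<alpha> * (\<Sum>l<N. u l) + \<beta> * (\<Sum>l<N. v l) + \<gamma> * (\<Sum>l<N. w l :: complex)"
  by (simp add: sum.distrib sum_distrib_left)

lemma cnj_i_sq: "cnj (\<i> * complex_of_real x) * (\<i> * complex_of_real x) = complex_of_real (x^2)"
  by (simp add: complex_eq_iff power2_eq_square)

lemma gen_entry:
  assumes X: "dim_row X = N" "dim_col X = r" and Y: "dim_row Y = N" "dim_col Y = r"
    and fX: "\<And>l k. l < N \<Longrightarrow> k < r \<Longrightarrow> X $$ (l,k) = f l * bent N D l (phi k)"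
    and gY: "\<And>l k. l < N \<Longrightarrow> k < r \<Longrightarrow> Y $$ (l,k) = g l * bent N D l (phi k)"
    and ab: "a < r" "b < r"
  shows "(mat_adjoint X * Y) $$ (a,b) = (\<Sum>l<N. cnj (f l) * g l * (zz D phi a b ^ l / of_nat N))"
proof -
  have "(mat_adjoint X * Y) $$ (a,b) = (\<Sum>l<N. cnj (X $$ (l,a)) * Y $$ (l,b))"
    using X Y ab by (subst adj_mult_entry) auto
  also have "\<dots> = (\<Sum>l<N. cnj (f l) * g l * (zz D phi a b ^ l / of_nat N))"
  proof (rule sum.cong)
    fix l assume "l \<in> {..<N}"
    then have "cnj (X $$ (l,a)) * Y $$ (l,b) = cnj (f l) * g l * (cnj (bent N D l (phi a)) * bent N D l (phi b))"
      using fX gY ab by simp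
    then show "cnj (X $$ (l,a)) * Y $$ (l,b) = cnj (f l) * g l * (zz D phi a b ^ l / of_nat N)"
      by (simp only: bent_prod zz_def)
  qed simp
  finally show ?thesis .
qed

lemma BB_entry: "a < r \<Longrightarrow> b < r \<Longrightarrow> (mat_adjoint (Bmat N D r phi) * Bmat N D r phi) $$ (a,b) = A0 (zz D phi a b) N"
  by (subst gen_entry[where f="\<lambda>_. 1" and g="\<lambda>_. 1"]) (simp_all add: A0_def sum_divide_distrib)

lemma BB''_entry: "a < r \<Longrightarrow> b < r \<Longrightarrow> complex_of_real (1 / (real n)\<^sup>2) * (mat_adjoint (Bmat N D r phi) * Bmat'' N D r phi) $$ (a,b)
   = - of_real (D^2) * A2 (zz D phi a b) n N"
proof -
  assume ab: "a < r" "b < r"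
  have "(mat_adjoint (Bmat N D r phi) * Bmat'' N D r phi) $$ (a,b) = (\<Sum>l<N. - of_real (D^2) * ((of_nat l)^2 * zz D phi a b ^ l / of_nat N))"
    using ab by (subst gen_entry[where f="\<lambda>_. 1" and g="\<lambda>l. - of_real ((D * real l)^2)"]) (simp_all add: algebra_simps power2_eq_square)
  also have "\<dots> = - of_real (D^2) * (\<Sum>l<N. (of_nat l)^2 * zz D phi a b ^ l / of_nat N)"
    by (simp add: sum_distrib_left)
  finally show ?thesis by (simp add: A2_alt sum_distrib_left power2_eq_square algebra_simps)
qed

lemma BpBp_entry: assumes "c \<noteq> 0" "D \<noteq> 0" "a < r" "b < r"
  shows "(mat_adjoint (Bperp n N c D r phi) * Bperp n N c D r phi) $$ (a,b) =
    3 * A0 (zz D phi a b) N - of_real (12 / c) * A1 (zz D phi a b) n N + of_real (12 / c^2) * A2 (zz D phi a b) n N"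
proof -
  let ?z = "zz D phi a b"
  have e: "\<And>l. cnj (\<i> * of_real (2 * sqrt 3 / c * (c / 2 - real l / real n))) * (\<i> * of_real (2 * sqrt 3 / c * (c / 2 - real l / real n)))
      = 3 - of_real (12 / c) * (of_nat l / of_nat n) + of_real (12 / c^2) * ((of_nat l)^2 / (of_nat n)^2)"
  proof -
    fix l
    have r: "(2 * sqrt 3 / c * (c / 2 - real l / real n))^2 = 3 - 12 / c * (real l / real n) + 12 / c^2 * ((real l)^2 / (real n)^2)"
    proof -
      have "(2 * sqrt 3 / c * (c / 2 - real l / real n))^2 = 12 / c^2 * (c / 2 - real l / real n)^2"
        by (simp add: power_mult_distrib power_divide)
      also have "\<dots> = 3 - 12 / c * (real l / real n) + 12 / c^2 * ((real l)^2 / (real n)^2)"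
        using assms(1) by (cases "n = 0") (simp_all add: power2_eq_square field_simps)
      finally show ?thesis .
    qed
    have "cnj (\<i> * of_real (2 * sqrt 3 / c * (c / 2 - real l / real n))) * (\<i> * of_real (2 * sqrt 3 / c * (c / 2 - real l / real n)))
      = of_real ((2 * sqrt 3 / c * (c / 2 - real l / real n))^2)" by (rule cnj_i_sq)
    also have "\<dots> = 3 - of_real (12 / c) * (of_nat l / of_nat n) + of_real (12 / c^2) * ((of_nat l)^2 / (of_nat n)^2)"
      unfolding r by simp
    finally show "?thesis l" .
  qed
  have "(mat_adjoint (Bperp n N c D r phi) * Bperp n N c D r phi) $$ (a,b) =
     (\<Sum>l<N. (3 - of_real (12 / c) * (of_nat l / of_nat n) + of_real (12 / c^2) * ((of_nat l)^2 / (of_nat n)^2)) * (?z ^ l / of_nat N))"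
    using assms by (subst gen_entry[where f="\<lambda>l. \<i> * of_real (2 * sqrt 3 / c * (c / 2 - real l / real n))" and g="\<lambda>l. \<i> * of_real (2 * sqrt 3 / c * (c / 2 - real l / real n))"]) (simp_all only: e, simp_all)
  also have "\<dots> = (\<Sum>l<N. 3 * (?z ^ l / of_nat N) + (- of_real (12 / c)) * (of_nat l * ?z^l / (of_nat n * of_nat N))
       + of_real (12 / c^2) * ((of_nat l)^2 * ?z ^ l / ((of_nat n)^2 * of_nat N)))"
    by (rule sum.cong) (simp_all add: algebra_simps)
  also have "\<dots> = 3 * A0 ?z N - of_real (12 / c) * A1 ?z n N + of_real (12 / c^2) * A2 ?z n N"
    unfolding lin3 A0_alt A1_alt A2_alt by simp
  finally show ?thesis .
qed

lemma BpB_entry: assumes "c \<noteq> 0" "D \<noteq> 0" "a < r" "b < r"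
  shows "(mat_adjoint (Bperp n N c D r phi) * Bmat N D r phi) $$ (a,b) =
    - \<i> * (of_real (sqrt 3) * A0 (zz D phi a b) N - of_real (2 * sqrt 3 / c) * A1 (zz D phi a b) n N)"
proof -
  let ?z = "zz D phi a b"
  have e: "\<And>l. cnj (\<i> * of_real (2 * sqrt 3 / c * (c / 2 - real l / real n)))
      = - \<i> * (of_real (sqrt 3) - of_real (2 * sqrt 3 / c) * (of_nat l / of_nat n))"
    using assms(1) by (simp add: field_simps)
  have "(mat_adjoint (Bperp n N c D r phi) * Bmat N D r phi) $$ (a,b) =
     (\<Sum>l<N. (- \<i> * (of_real (sqrt 3) - of_real (2 * sqrt 3 / c) * (of_nat l / of_nat n))) * (?z ^ l / of_nat N))"
    using assms by (subst gen_entry[where f="\<lambda>l. \<i> * of_real (2 * sqrt 3 / c * (c / 2 - real l / real n))" and g="\<lambda>_. 1"]) (simp_all only: e, simp_all)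
  also have "\<dots> = (\<Sum>l<N. (- \<i> * of_real (sqrt 3)) * (?z ^ l / of_nat N) + (\<i> * of_real (2 * sqrt 3 / c)) * (of_nat l * ?z^l / (of_nat n * of_nat N)))"
    by (rule sum.cong) (simp_all add: algebra_simps)
  also have "\<dots> = - \<i> * (of_real (sqrt 3) * A0 ?z N - of_real (2 * sqrt 3 / c) * A1 ?z n N)"
    unfolding lin2 A0_alt A1_alt by (simp add: algebra_simps)
  finally show ?thesis .
qed

lemma N_at_top: assumes N_lim: "(\<lambda>n. real (N n) / real n) \<longlonglongrightarrow> c" and c: "0 < c"
  shows "filterlim (\<lambda>n. real (N n)) at_top sequentially"
proof -
  have "filterlim (\<lambda>n. real (N n) / real n * real n) at_top sequentially"
    by (rule filterlim_tendsto_pos_mult_at_top[OF N_lim c filterlim_real_sequentially])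
  moreover have ev: "eventually (\<lambda>n. real (N n) / real n * real n = real (N n)) sequentially"
    using eventually_gt_at_top[of 0] by eventually_elim simp
  ultimately show ?thesis using filterlim_cong[OF refl refl ev] by simp
qed

lemma inv_n_lim: "(\<lambda>n. 1 / real n) \<longlonglongrightarrow> 0"
  using lim_inverse_n by (simp add: inverse_eq_divide)

lemma A_lims_1:
  assumes N_lim: "(\<lambda>n. real (N n) / real n) \<longlonglongrightarrow> c" and c: "0 < c"
  shows "(\<lambda>n. A0 1 (N n)) \<longlonglongrightarrow> 1" "(\<lambda>n. A1 1 n (N n)) \<longlonglongrightarrow> of_real (c / 2)"
    "(\<lambda>n. A2 1 n (N n)) \<longlonglongrightarrow> of_real (c^2 / 3)"
proof -
  have Ntop: "filterlim (\<lambda>n. real (N n)) at_top sequentially" by (rule N_at_top[OF N_lim c])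
  have ev: "eventually (\<lambda>n. 0 < N n \<and> 0 < n) sequentially"
  proof -
    have "eventually (\<lambda>n. real (N n) > 0) sequentially" using Ntop unfolding filterlim_at_top_dense by blast
    then show ?thesis using eventually_gt_at_top[of 0] by eventually_elim simp
  qed
  show "(\<lambda>n. A0 1 (N n)) \<longlonglongrightarrow> 1"
    by (rule Lim_transform_eventually[OF tendsto_const]) (use ev in \<open>eventually_elim, simp add: A0_def\<close>)
  have l1: "(\<lambda>n. (real (N n) / real n - 1 / real n) / 2) \<longlonglongrightarrow> c / 2"
  proof -
    have "(\<lambda>n. (real (N n) / real n - 1 / real n) / 2) \<longlonglongrightarrow> (c - 0) / 2"
      by (intro tendsto_intros N_lim inv_n_lim) simp
    then show ?thesis by simp
  qed
  have l2: "(\<lambda>n. (real (N n) / real n - 1 / real n) * (2 * (real (N n) / real n) - 1 / real n) / 6) \<longlonglongrightarrow> c^2 / 3"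
  proof -
    have "(\<lambda>n. (real (N n) / real n - 1 / real n) * (2 * (real (N n) / real n) - 1 / real n) / 6) \<longlonglongrightarrow> (c - 0) * (2 * c - 0) / 6"
      by (intro tendsto_intros N_lim inv_n_lim) simp
    then show ?thesis by (simp add: power2_eq_square)
  qed
  show "(\<lambda>n. A1 1 n (N n)) \<longlonglongrightarrow> of_real (c / 2)"
  proof (rule Lim_transform_eventually[OF tendsto_of_real[OF l1, where 'a=complex]])
    show "\<forall>\<^sub>F n in sequentially. complex_of_real ((real (N n) / real n - 1 / real n) / 2) = A1 1 n (N n)"
      using ev
    proof eventually_elim
      case (elim n)
      have "(\<Sum>l<N n. of_nat l * (1::complex)^l) = of_real (\<Sum>l<N n. real l)" by simp
      also have "(\<Sum>l<N n. real l) = real (N n) * (real (N n) - 1) / 2" using sum_l[of "N n"] by simp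
      finally have S: "(\<Sum>l<N n. of_nat l * (1::complex)^l) = of_real (real (N n) * (real (N n) - 1) / 2)" .
      have "A1 1 n (N n) = of_real (real (N n) * (real (N n) - 1) / 2 / (real n * real (N n)))"
        unfolding A1_def S by simp
      also have "real (N n) * (real (N n) - 1) / 2 / (real n * real (N n)) = (real (N n) / real n - 1 / real n) / 2"
        using elim by (simp add: field_simps)
      finally show ?case by simp
    qed
  qed
  show "(\<lambda>n. A2 1 n (N n)) \<longlonglongrightarrow> of_real (c^2 / 3)"
  proof (rule Lim_transform_eventually[OF tendsto_of_real[OF l2, where 'a=complex]])
    show "\<forall>\<^sub>F n in sequentially. complex_of_real ((real (N n) / real n - 1 / real n) * (2 * (real (N n) / real n) - 1 / real n) / 6) = A2 1 n (N n)"
      using ev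
    proof eventually_elim
      case (elim n)
      have "(\<Sum>l<N n. (of_nat l)^2 * (1::complex)^l) = of_real (\<Sum>l<N n. (real l)^2)" by simp
      also have "(\<Sum>l<N n. (real l)^2) = real (N n) * (real (N n) - 1) * (2 * real (N n) - 1) / 6" using sum_l2[of "N n"] by simp
      finally have S: "(\<Sum>l<N n. (of_nat l)^2 * (1::complex)^l) = of_real (real (N n) * (real (N n) - 1) * (2 * real (N n) - 1) / 6)" .
      have "A2 1 n (N n) = of_real (real (N n) * (real (N n) - 1) * (2 * real (N n) - 1) / 6 / ((real n)^2 * real (N n)))"
        unfolding A2_def S by simp
      also have "real (N n) * (real (N n) - 1) * (2 * real (N n) - 1) / 6 / ((real n)^2 * real (N n)) = (real (N n) / real n - 1 / real n) * (2 * (real (N n) / real n) - 1 / real n) / 6"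
        using elim by (simp add: field_simps power2_eq_square)
      finally show ?case by simp
    qed
  qed
qed

lemma A_lims_ne1:
  assumes N_lim: "(\<lambda>n. real (N n) / real n) \<longlonglongrightarrow> c" and c: "0 < c" and N_le: "\<And>n. N n \<le> n"
    and z: "cmod z = 1" "z \<noteq> 1"
  shows "(\<lambda>n. A0 z (N n)) \<longlonglongrightarrow> 0" "(\<lambda>n. A1 z n (N n)) \<longlonglongrightarrow> 0"
    "(\<lambda>n. A2 z n (N n)) \<longlonglongrightarrow> 0"
proof -
  have Ntop: "filterlim (\<lambda>n. real (N n)) at_top sequentially" by (rule N_at_top[OF N_lim c])
  have ev: "eventually (\<lambda>n. 0 < N n \<and> 0 < n) sequentially"
  proof -
    have "eventually (\<lambda>n. real (N n) > 0) sequentially" using Ntop unfolding filterlim_at_top_dense by blast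
    then show ?thesis using eventually_gt_at_top[of 0] by eventually_elim simp
  qed
  define K where "K = 2 / cmod (1 - z)"
  have Kp: "0 < K" using z by (simp add: K_def)
  have invN: "(\<lambda>n. 1 / real (N n)) \<longlonglongrightarrow> 0"
    using tendsto_inverse_0_at_top[OF Ntop] by (simp add: inverse_eq_divide)
  show "(\<lambda>n. A0 z (N n)) \<longlonglongrightarrow> 0"
  proof (rule Lim_null_comparison)
    show "(\<lambda>n. K * (1 / real (N n))) \<longlonglongrightarrow> 0" using tendsto_mult_right_zero[OF invN] .
    show "\<forall>\<^sub>F n in sequentially. norm (A0 z (N n)) \<le> K * (1 / real (N n))"
      using ev
    proof eventually_elim
      case (elim n)
      have "norm (A0 z (N n)) = cmod (\<Sum>l<N n. z^l) / real (N n)" by (simp add: A0_def norm_divide)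
      also have "\<dots> \<le> K / real (N n)" using bound0[OF z, of "N n"] elim unfolding K_def by (intro divide_right_mono) simp_all
      finally show ?case by simp
    qed
  qed
  show "(\<lambda>n. A1 z n (N n)) \<longlonglongrightarrow> 0"
  proof (rule Lim_null_comparison)
    show "(\<lambda>n. K * (1 / real n)) \<longlonglongrightarrow> 0" using tendsto_mult_right_zero[OF inv_n_lim] .
    show "\<forall>\<^sub>F n in sequentially. norm (A1 z n (N n)) \<le> K * (1 / real n)"
      using ev
    proof eventually_elim
      case (elim n)
      have "norm (A1 z n (N n)) = cmod (\<Sum>l<N n. of_nat l * z^l) / (real n * real (N n))" by (simp add: A1_def norm_divide norm_mult)
      also have "\<dots> \<le> (K * real (N n)) / (real n * real (N n))" using bound1[OF z, of "N n"] elim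
        by (intro divide_right_mono) (simp_all add: K_def)
      also have "\<dots> = K * (1 / real n)" using elim by simp
      finally show ?case .
    qed
  qed
  show "(\<lambda>n. A2 z n (N n)) \<longlonglongrightarrow> 0"
  proof (rule Lim_null_comparison)
    show "(\<lambda>n. K * (1 / real n)) \<longlonglongrightarrow> 0" using tendsto_mult_right_zero[OF inv_n_lim] .
    show "\<forall>\<^sub>F n in sequentially. norm (A2 z n (N n)) \<le> K * (1 / real n)"
      using ev
    proof eventually_elim
      case (elim n)
      have "norm (A2 z n (N n)) = cmod (\<Sum>l<N n. (of_nat l)^2 * z^l) / ((real n)^2 * real (N n))" by (simp add: A2_def norm_divide norm_mult norm_power)
      also have "\<dots> \<le> (K * (real (N n))^2) / ((real n)^2 * real (N n))" using bound2[OF z, of "N n"] elim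
        by (intro divide_right_mono) (simp_all add: K_def)
      also have "\<dots> = K * (real (N n) / real n) * (1 / real n)" using elim by (simp add: power2_eq_square)
      also have "\<dots> \<le> K * 1 * (1 / real n)" using elim N_le[of n] Kp
        by (intro mult_right_mono mult_left_mono) simp_all
      finally show ?case by simp
    qed
  qed
qed

lemma zz_props: assumes D: "0 < D" and phi: "\<And>k. k < r \<Longrightarrow> 0 \<le> phi k \<and> phi k \<le> pi / D"
  and inj: "inj_on phi {..<r}" and ab: "a < r" "b < r"
  shows "cmod (zz D phi a b) = 1" "zz D phi a b = 1 \<longleftrightarrow> a = b"
proof -
  show "cmod (zz D phi a b) = 1" by (simp add: zz_def)
  show "zz D phi a b = 1 \<longleftrightarrow> a = b"
  proof
    assume "a = b" then show "zz D phi a b = 1" by (simp add: zz_def)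
  next
    assume z1: "zz D phi a b = 1"
    then obtain m :: int where m: "D * (phi a - phi b) = 2 * pi * m"
      unfolding zz_def exp_eq_1 by (auto elim!: Ints_cases)
    have "\<bar>D * (phi a - phi b)\<bar> \<le> pi"
    proof -
      have "\<bar>phi a - phi b\<bar> \<le> pi / D" using phi[OF ab(1)] phi[OF ab(2)] by linarith
      then have "D * \<bar>phi a - phi b\<bar> \<le> D * (pi / D)" using D by (intro mult_left_mono) simp_all
      then show ?thesis using D by (simp add: abs_mult)
    qed
    then have "\<bar>2 * pi * m\<bar> \<le> pi" using m by simp
    then have "2 * \<bar>real_of_int m\<bar> \<le> 1" using pi_gt_zero by (simp add: abs_mult)
    then have "m = 0" by linarith
    then have "phi a = phi b" using m D by simp
    then show "a = b" using inj ab by (auto dest: inj_onD)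
  qed
qed

lemma parts1to4:
  fixes N :: "nat \<Rightarrow> nat" and c D :: real and r :: nat and phi :: "nat \<Rightarrow> real"
  assumes N_le: "\<And>n. N n \<le> n"
    and N_lim: "(\<lambda>n. real (N n) / real n) \<longlonglongrightarrow> c"
    and c_pos: "0 < c" and D_pos: "0 < D"
    and phi_range: "\<And>k. k < r \<Longrightarrow> 0 \<le> phi k \<and> phi k \<le> pi / D"
    and phi_distinct: "inj_on phi {..<r}"
  shows
    "(\<forall>a<r. \<forall>b<r. (\<lambda>n. (mat_adjoint (Bmat (N n) D r phi) * Bmat (N n) D r phi) $$ (a, b))
        \<longlonglongrightarrow> (if a = b then 1 else 0)) \<and>
     (\<forall>a<r. \<forall>b<r. (\<lambda>n. complex_of_real (1 / (real n)\<^sup>2) *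
          (mat_adjoint (Bmat (N n) D r phi) * Bmat'' (N n) D r phi) $$ (a, b))
        \<longlonglongrightarrow> (if a = b then complex_of_real (- (c\<^sup>2 * D\<^sup>2 / 3)) else 0)) \<and>
     (\<forall>a<r. \<forall>b<r. (\<lambda>n. (mat_adjoint (Bperp n (N n) c D r phi) * Bperp n (N n) c D r phi) $$ (a, b))
        \<longlonglongrightarrow> (if a = b then 1 else 0)) \<and>
     (\<forall>a<r. \<forall>b<r. (\<lambda>n. (mat_adjoint (Bperp n (N n) c D r phi) * Bmat (N n) D r phi) $$ (a, b))
        \<longlonglongrightarrow> 0)"
proof -
  have c0: "c \<noteq> 0" and D0: "D \<noteq> 0" using c_pos D_pos by auto
  have lims: "(\<lambda>n. A0 (zz D phi a b) (N n)) \<longlonglongrightarrow> (if a = b then 1 else 0) \<and>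
      (\<lambda>n. A1 (zz D phi a b) n (N n)) \<longlonglongrightarrow> (if a = b then of_real (c/2) else 0) \<and>
      (\<lambda>n. A2 (zz D phi a b) n (N n)) \<longlonglongrightarrow> (if a = b then of_real (c^2/3) else 0)"
    if ab: "a < r" "b < r" for a b
  proof (cases "a = b")
    case True
    then have "zz D phi a b = 1" by (simp add: zz_def)
    then show ?thesis using A_lims_1[OF N_lim c_pos] True by simp
  next
    case False
    have z: "cmod (zz D phi a b) = 1" "zz D phi a b \<noteq> 1"
      using zz_props[OF D_pos phi_range phi_distinct ab] False by auto
    show ?thesis using A_lims_ne1[OF N_lim c_pos N_le z] False by simp
  qed
  have 1: "(\<lambda>n. (mat_adjoint (Bmat (N n) D r phi) * Bmat (N n) D r phi) $$ (a, b))
        \<longlonglongrightarrow> (if a = b then 1 else 0)" if ab: "a < r" "b < r" for a b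
    unfolding BB_entry[OF ab] using lims[OF ab] by simp
  have 2: "(\<lambda>n. complex_of_real (1 / (real n)\<^sup>2) *
          (mat_adjoint (Bmat (N n) D r phi) * Bmat'' (N n) D r phi) $$ (a, b))
        \<longlonglongrightarrow> (if a = b then complex_of_real (- (c\<^sup>2 * D\<^sup>2 / 3)) else 0)" if ab: "a < r" "b < r" for a b
  proof -
    have "(\<lambda>n. - of_real (D^2) * A2 (zz D phi a b) n (N n)) \<longlonglongrightarrow> - of_real (D^2) * (if a = b then of_real (c^2/3) else 0)"
      using lims[OF ab] by (intro tendsto_intros) simp
    then show ?thesis unfolding BB''_entry[OF ab] by (cases "a = b") (simp_all add: algebra_simps)
  qed
  have 3: "(\<lambda>n. (mat_adjoint (Bperp n (N n) c D r phi) * Bperp n (N n) c D r phi) $$ (a, b))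
        \<longlonglongrightarrow> (if a = b then 1 else 0)" if ab: "a < r" "b < r" for a b
  proof -
    have lim: "(\<lambda>n. 3 * A0 (zz D phi a b) (N n) - of_real (12 / c) * A1 (zz D phi a b) n (N n) + of_real (12 / c^2) * A2 (zz D phi a b) n (N n))
      \<longlonglongrightarrow> 3 * (if a = b then 1 else 0) - of_real (12 / c) * (if a = b then of_real (c/2) else 0) + of_real (12 / c^2) * (if a = b then of_real (c^2/3) else 0)"
      using lims[OF ab] by (intro tendsto_intros) simp_all
    have eq: "3 * (if a = b then 1 else 0) - of_real (12 / c) * (if a = b then of_real (c/2) else 0) + of_real (12 / c^2) * (if a = b then of_real (c^2/3) else (0::complex))
       = (if a = b then 1 else 0)"
    proof -
      have "3 - 12 / c * (c / 2) + 12 / c^2 * (c^2 / 3) = (1::real)" using c0 by (simp add: field_simps)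
      then have "3 - of_real (12 / c) * of_real (c/2) + of_real (12 / c^2) * of_real (c^2/3) = (of_real 1 :: complex)"
        by (metis of_real_add of_real_diff of_real_mult of_real_numeral)
      then show ?thesis using c0 by simp
    qed
    show ?thesis unfolding BpBp_entry[OF c0 D0 ab] using lim unfolding eq .
  qed
  have 4: "(\<lambda>n. (mat_adjoint (Bperp n (N n) c D r phi) * Bmat (N n) D r phi) $$ (a, b))
        \<longlonglongrightarrow> 0" if ab: "a < r" "b < r" for a b
  proof -
    have lim: "(\<lambda>n. - \<i> * (of_real (sqrt 3) * A0 (zz D phi a b) (N n) - of_real (2 * sqrt 3 / c) * A1 (zz D phi a b) n (N n)))
      \<longlonglongrightarrow> - \<i> * (of_real (sqrt 3) * (if a = b then 1 else 0) - of_real (2 * sqrt 3 / c) * (if a = b then of_real (c/2) else 0))"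
      using lims[OF ab] by (intro tendsto_intros) simp_all
    have eq: "of_real (sqrt 3) * (if a = b then 1 else 0) - of_real (2 * sqrt 3 / c) * (if a = b then of_real (c/2) else 0) = (0::complex)"
    proof -
      have "sqrt 3 - 2 * sqrt 3 / c * (c / 2) = (0::real)" using c0 by (simp add: field_simps)
      then have "of_real (sqrt 3) - of_real (2 * sqrt 3 / c) * of_real (c/2) = (of_real 0 :: complex)"
        by (metis of_real_diff of_real_mult)
      then show ?thesis using c0 by simp
    qed
    show ?thesis unfolding BpB_entry[OF c0 D0 ab] using lim unfolding eq by simp
  qed
  show ?thesis using 1 2 3 4 by blast
qed

lemma vnorm_L2: "vnorm x = L2_set (\<lambda>i. cmod (x $ i)) {..<dim_vec x}"
  by (simp add: vnorm_def L2_set_def)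

lemma vnorm_nonneg: "0 \<le> vnorm x" by (simp add: vnorm_def sum_nonneg)

lemma vnorm_add_le: "dim_vec u = dim_vec v \<Longrightarrow> vnorm (u + v) \<le> vnorm u + vnorm v"
proof -
  assume d: "dim_vec u = dim_vec v"
  have "vnorm (u + v) = L2_set (\<lambda>i. cmod (u $ i + v $ i)) {..<dim_vec v}"
    unfolding vnorm_L2 using d by (intro L2_set_cong) auto
  also have "\<dots> \<le> L2_set (\<lambda>i. cmod (u $ i) + cmod (v $ i)) {..<dim_vec v}"
    by (rule L2_set_mono) (auto intro: norm_triangle_ineq)
  also have "\<dots> \<le> L2_set (\<lambda>i. cmod (u $ i)) {..<dim_vec v} + L2_set (\<lambda>i. cmod (v $ i)) {..<dim_vec v}"
    by (rule L2_set_triangle_ineq)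
  finally show ?thesis using d by (simp add: vnorm_L2)
qed

lemma sum_abs_le_vnorm: "(\<Sum>i<dim_vec x. cmod (x $ i)) \<le> sqrt (real (dim_vec x)) * vnorm x"
proof -
  have "(\<Sum>i<dim_vec x. cmod (x $ i)) = (\<Sum>i<dim_vec x. \<bar>cmod (x $ i)\<bar> * \<bar>1\<bar>)" by simp
  also have "\<dots> \<le> L2_set (\<lambda>i. cmod (x $ i)) {..<dim_vec x} * L2_set (\<lambda>i. 1) {..<dim_vec x}"
    by (rule L2_set_mult_ineq)
  also have "\<dots> = sqrt (real (dim_vec x)) * vnorm x" by (simp add: L2_set_constant vnorm_L2)
  finally show ?thesis .
qed

lemma vnorm_entry_bound: assumes "\<And>l. l < dim_vec v \<Longrightarrow> cmod (v $ l) \<le> t" "0 \<le> t"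
  shows "vnorm v \<le> sqrt (real (dim_vec v)) * t"
proof -
  have "vnorm v \<le> L2_set (\<lambda>i. t) {..<dim_vec v}" unfolding vnorm_L2
    by (rule L2_set_mono) (use assms in auto)
  also have "\<dots> = sqrt (real (dim_vec v)) * t" using assms(2) by (simp add: L2_set_constant)
  finally show ?thesis .
qed

lemma mult_vec_entry: "i < dim_row A \<Longrightarrow> dim_vec v = dim_col A \<Longrightarrow> (A *\<^sub>v v) $ i = (\<Sum>p<dim_col A. A $$ (i,p) * v $ p)"
  by (simp add: scalar_prod_def atLeast0LessThan)

definition bnd :: "complex mat \<Rightarrow> bool" where
  "bnd B \<longleftrightarrow> (\<forall>l<dim_row B. \<forall>p<dim_col B. cmod (B $$ (l,p)) \<le> 1 / sqrt (real (dim_row B)))"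

lemma bnd_mult_vnorm: assumes "bnd B" "dim_vec v = dim_col B"
  shows "vnorm (B *\<^sub>v v) \<le> (\<Sum>p<dim_col B. cmod (v $ p))"
proof -
  let ?N = "dim_row B"
  let ?t = "(\<Sum>p<dim_col B. cmod (v $ p)) / sqrt (real ?N)"
  have e: "cmod ((B *\<^sub>v v) $ l) \<le> ?t" if l: "l < ?N" for l
  proof -
    have "cmod ((B *\<^sub>v v) $ l) = cmod (\<Sum>p<dim_col B. B $$ (l,p) * v $ p)" using l assms(2) by (subst mult_vec_entry) auto
    also have "\<dots> \<le> (\<Sum>p<dim_col B. cmod (B $$ (l,p)) * cmod (v $ p))" by (rule order_trans[OF norm_sum]) (simp add: norm_mult)
    also have "\<dots> \<le> (\<Sum>p<dim_col B. 1 / sqrt (real ?N) * cmod (v $ p))"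
      using assms(1) l unfolding bnd_def by (intro sum_mono mult_right_mono) auto
    also have "\<dots> = ?t" by (simp add: sum_divide_distrib)
    finally show ?thesis .
  qed
  have "vnorm (B *\<^sub>v v) \<le> sqrt (real ?N) * ?t"
    using vnorm_entry_bound[of "B *\<^sub>v v" ?t] e by (simp add: sum_nonneg)
  also have "\<dots> \<le> (\<Sum>p<dim_col B. cmod (v $ p))"
  proof (cases "?N = 0")
    case True
    have "0 \<le> (\<Sum>p<dim_col B. cmod (v $ p))" by (intro sum_nonneg) simp
    then show ?thesis using True by simp
  next
    case False
    then have "sqrt (real ?N) \<noteq> 0" by simp
    then show ?thesis by simp
  qed
  finally show ?thesis .
qed

lemma bnd_adj_entry: assumes "bnd B" "dim_vec x = dim_row B" "q < dim_col B"
  shows "cmod ((mat_adjoint B *\<^sub>v x) $ q) \<le> vnorm x"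
proof -
  let ?N = "dim_row B"
  have "(mat_adjoint B *\<^sub>v x) $ q = (\<Sum>l<?N. cnj (B $$ (l,q)) * x $ l)"
    using assms by (subst mult_vec_entry) auto
  then have "cmod ((mat_adjoint B *\<^sub>v x) $ q) = cmod (\<Sum>l<?N. cnj (B $$ (l,q)) * x $ l)" by simp
  also have "\<dots> \<le> (\<Sum>l<?N. cmod (B $$ (l,q)) * cmod (x $ l))" by (rule order_trans[OF norm_sum]) (simp add: norm_mult)
  also have "\<dots> \<le> (\<Sum>l<?N. 1 / sqrt (real ?N) * cmod (x $ l))"
    using assms(1,3) unfolding bnd_def by (intro sum_mono mult_right_mono) auto
  also have "\<dots> = (\<Sum>l<dim_vec x. cmod (x $ l)) / sqrt (real ?N)" using assms(2) by (simp add: sum_divide_distrib)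
  also have "\<dots> \<le> sqrt (real ?N) * vnorm x / sqrt (real ?N)"
    using sum_abs_le_vnorm[of x] assms(2) by (intro divide_right_mono) simp_all
  also have "\<dots> \<le> vnorm x" by (cases "?N = 0") (simp_all add: vnorm_nonneg)
  finally show ?thesis .
qed

lemma sandwich_bound: assumes "bnd B" "B \<in> carrier_mat N r" "X \<in> carrier_mat r r" "x \<in> carrier_vec N"
  shows "vnorm ((B * X * mat_adjoint B) *\<^sub>v x) \<le> (\<Sum>p<r. \<Sum>q<r. cmod (X $$ (p,q))) * vnorm x"
proof -
  have aB: "mat_adjoint B \<in> carrier_mat r N" using assms(2) by (intro carrier_matI) auto
  define y where "y = mat_adjoint B *\<^sub>v x"
  have y: "y \<in> carrier_vec r" using aB assms(4) by (simp add: y_def)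
  have "(B * X * mat_adjoint B) *\<^sub>v x = B *\<^sub>v (X *\<^sub>v y)"
    using assms aB by (simp add: y_def assoc_mult_mat_vec[of _ N r _ N])
  then have "vnorm ((B * X * mat_adjoint B) *\<^sub>v x) \<le> (\<Sum>p<r. cmod ((X *\<^sub>v y) $ p))"
    using bnd_mult_vnorm[OF assms(1), of "X *\<^sub>v y"] assms by simp
  also have "\<dots> \<le> (\<Sum>p<r. \<Sum>q<r. cmod (X $$ (p,q)) * vnorm x)"
  proof (rule sum_mono)
    fix p assume p: "p \<in> {..<r}"
    have "cmod ((X *\<^sub>v y) $ p) = cmod (\<Sum>q<r. X $$ (p,q) * y $ q)" using p assms y by (subst mult_vec_entry) auto
    also have "\<dots> \<le> (\<Sum>q<r. cmod (X $$ (p,q)) * cmod (y $ q))" by (rule order_trans[OF norm_sum]) (simp add: norm_mult)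
    also have "\<dots> \<le> (\<Sum>q<r. cmod (X $$ (p,q)) * vnorm x)"
      using bnd_adj_entry[OF assms(1)] assms by (intro sum_mono mult_left_mono) (auto simp: y_def)
    finally show "cmod ((X *\<^sub>v y) $ p) \<le> (\<Sum>q<r. cmod (X $$ (p,q)) * vnorm x)" .
  qed
  also have "\<dots> = (\<Sum>p<r. \<Sum>q<r. cmod (X $$ (p,q))) * vnorm x" by (simp add: sum_distrib_right)
  finally show ?thesis .
qed

lemma row_scalar: "dim_vec v = dim_col A \<Longrightarrow> row A i \<bullet> v = (\<Sum>p<dim_col A. A $$ (i,p) * v $ p)"
  by (auto simp: scalar_prod_def row_def atLeast0LessThan intro!: sum.cong)

lemma cnsq: "(complex_of_real (cmod z))^2 = z * cnj z"
  by (metis complex_norm_square of_real_power)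

lemma mat_vec_unit: fixes A :: "complex mat" assumes "A \<in> carrier_mat n m" "a < n" "b < m"
  shows "(A *\<^sub>v unit_vec m b) $ a = A $$ (a,b)"
proof -
  have "(A *\<^sub>v unit_vec m b) $ a = (\<Sum>p<m. A $$ (a,p) * unit_vec m b $ p)"
    using assms by (subst mult_vec_entry) auto
  also have "\<dots> = (\<Sum>p<m. if p = b then A $$ (a,p) else 0)"
    by (intro sum.cong) (auto simp: unit_vec_def)
  also have "\<dots> = A $$ (a,b)" using assms by simp
  finally show ?thesis .
qed

lemma mat_eq_by_vec: fixes A B :: "complex mat" assumes "A \<in> carrier_mat n m" "B \<in> carrier_mat n m"
  and "\<And>x. x \<in> carrier_vec m \<Longrightarrow> A *\<^sub>v x = B *\<^sub>v x"
shows "A = B"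
proof (rule eq_matI)
  fix a b assume "a < dim_row B" "b < dim_col B"
  then have ab: "a < n" "b < m" using assms by auto
  have "A $$ (a,b) = (A *\<^sub>v unit_vec m b) $ a" using mat_vec_unit[OF assms(1) ab] by simp
  also have "\<dots> = (B *\<^sub>v unit_vec m b) $ a" using assms(3)[of "unit_vec m b"] by simp
  also have "\<dots> = B $$ (a,b)" using mat_vec_unit[OF assms(2) ab] .
  finally show "A $$ (a,b) = B $$ (a,b)" .
qed (use assms in auto)

lemma cinner_minus_left: "dim_vec a = dim_vec w \<Longrightarrow> dim_vec b = dim_vec w \<Longrightarrow> cinner (a - b) w = cinner a w - cinner b w"
  by (simp add: cinner_def algebra_simps sum_subtractf)

lemma cinner_self_zero: "cinner d d = 0 \<Longrightarrow> d = 0\<^sub>v (dim_vec d)"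
proof -
  assume h: "cinner d d = 0"
  have "complex_of_real (\<Sum>i<dim_vec d. (cmod (d $ i))^2) = cinner d d"
    unfolding cinner_def of_real_sum by (intro sum.cong refl) (rule complex_norm_square)
  then have "(\<Sum>i<dim_vec d. (cmod (d $ i))^2) = 0" using h of_real_eq_0_iff by metis
  then have "\<forall>i\<in>{..<dim_vec d}. (cmod (d $ i))^2 = 0" by (subst (asm) sum_nonneg_eq_0_iff) auto
  then show ?thesis by (intro eq_vecI) auto
qed

lemma orth_proj_unique: assumes P1: "is_orth_proj P1 W m" and P2: "is_orth_proj P2 W m"
  and Wsub: "W \<subseteq> carrier_vec m" and Wminus: "\<And>u v. u \<in> W \<Longrightarrow> v \<in> W \<Longrightarrow> u - v \<in> W"
shows "P1 = P2"
proof (rule mat_eq_by_vec)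
  show c1: "P1 \<in> carrier_mat m m" and c2: "P2 \<in> carrier_mat m m" using P1 P2 unfolding is_orth_proj_def by auto
  fix x :: "complex vec" assume x: "x \<in> carrier_vec m"
  have y1: "P1 *\<^sub>v x \<in> W" and o1: "\<And>w. w \<in> W \<Longrightarrow> cinner (x - P1 *\<^sub>v x) w = 0"
    using P1 x unfolding is_orth_proj_def by auto
  have y2: "P2 *\<^sub>v x \<in> W" and o2: "\<And>w. w \<in> W \<Longrightarrow> cinner (x - P2 *\<^sub>v x) w = 0"
    using P2 x unfolding is_orth_proj_def by auto
  define d where "d = P1 *\<^sub>v x - P2 *\<^sub>v x"
  have dW: "d \<in> W" using Wminus[OF y1 y2] by (simp add: d_def)
  have dim: "dim_vec d = m" using c1 c2 x by (simp add: d_def)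
  have "d = (x - P2 *\<^sub>v x) - (x - P1 *\<^sub>v x)"
    using c1 c2 x by (intro eq_vecI) (auto simp: d_def)
  then have "cinner d d = cinner (x - P2 *\<^sub>v x) d - cinner (x - P1 *\<^sub>v x) d"
    using c1 c2 x dim by (metis cinner_minus_left index_minus_vec(2) dim_mult_mat_vec carrier_matD(1) carrier_vecD)
  also have "\<dots> = 0" using o1[OF dW] o2[OF dW] by simp
  finally have "d = 0\<^sub>v m" using cinner_self_zero dim by metis
  then have d0: "d = 0\<^sub>v m" .
  show "P1 *\<^sub>v x = P2 *\<^sub>v x"
  proof (rule eq_vecI)
    fix i assume i: "i < dim_vec (P2 *\<^sub>v x)"
    then have "d $ i = 0" using d0 c2 by simp
    then show "(P1 *\<^sub>v x) $ i = (P2 *\<^sub>v x) $ i" using i c1 c2 unfolding d_def by simp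
  qed (use c1 c2 in simp)
qed

lemma cinner_mult: assumes "B \<in> carrier_mat N m" "u \<in> carrier_vec m" "v \<in> carrier_vec N"
  shows "cinner v (B *\<^sub>v u) = (\<Sum>p<m. (mat_adjoint B *\<^sub>v v) $ p * cnj (u $ p))"
proof -
  have "cinner v (B *\<^sub>v u) = (\<Sum>l<N. v $ l * cnj (\<Sum>p<m. B $$ (l,p) * u $ p))"
    unfolding cinner_def using assms by (intro sum.cong) (auto simp: row_scalar)
  also have "\<dots> = (\<Sum>l<N. \<Sum>p<m. cnj (B $$ (l,p)) * v $ l * cnj (u $ p))"
    by (simp add: sum_distrib_left algebra_simps)
  also have "\<dots> = (\<Sum>p<m. \<Sum>l<N. cnj (B $$ (l,p)) * v $ l * cnj (u $ p))" by (rule sum.swap)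
  also have "\<dots> = (\<Sum>p<m. (mat_adjoint B *\<^sub>v v) $ p * cnj (u $ p))"
  proof (rule sum.cong)
    fix p assume p: "p \<in> {..<m}"
    have "(mat_adjoint B *\<^sub>v v) $ p = (\<Sum>l<N. cnj (B $$ (l,p)) * v $ l)"
      using assms p by (subst mult_vec_entry) auto
    then show "(\<Sum>l<N. cnj (B $$ (l,p)) * v $ l * cnj (u $ p)) = (mat_adjoint B *\<^sub>v v) $ p * cnj (u $ p)"
      by (simp add: sum_distrib_right)
  qed simp
  finally show ?thesis .
qed

lemma cmod_add_sq: "(cmod (a + b))^2 = (cmod a)^2 + (cmod b)^2 + 2 * Re (b * cnj a)"
  unfolding cmod_power2 by (simp add: power2_eq_square algebra_simps)

lemma pythag: assumes "dim_vec x = dim_vec y" "cinner (x - y) y = 0"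
  shows "vnorm y \<le> vnorm x"
proof -
  let ?n = "dim_vec y"
  have "(\<Sum>i<?n. (cmod (x $ i))^2) = (\<Sum>i<?n. (cmod (y $ i))^2 + (cmod ((x - y) $ i))^2 + 2 * Re ((x - y) $ i * cnj (y $ i)))"
  proof (rule sum.cong)
    fix i assume "i \<in> {..<?n}"
    then have "x $ i = y $ i + (x - y) $ i" using assms by simp
    then show "(cmod (x $ i))^2 = (cmod (y $ i))^2 + (cmod ((x - y) $ i))^2 + 2 * Re ((x - y) $ i * cnj (y $ i))"
      using cmod_add_sq by metis
  qed simp
  also have "\<dots> = (\<Sum>i<?n. (cmod (y $ i))^2) + (\<Sum>i<?n. (cmod ((x - y) $ i))^2) + 2 * Re (\<Sum>i<?n. (x - y) $ i * cnj (y $ i))"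
    by (simp only: sum.distrib Re_sum sum_distrib_left)
  also have "(\<Sum>i<?n. (x - y) $ i * cnj (y $ i)) = 0"
    using assms(2) unfolding cinner_def by simp
  also have "(\<Sum>i<?n. (cmod (y $ i))^2) + (\<Sum>i<?n. (cmod ((x - y) $ i))^2) + 2 * Re 0 \<ge> (\<Sum>i<?n. (cmod (y $ i))^2)"
    by (simp add: sum_nonneg)
  finally show ?thesis unfolding vnorm_def using assms(1) by simp
qed

definition qf :: "complex mat \<Rightarrow> complex vec \<Rightarrow> nat \<Rightarrow> complex" where
  "qf G z m = (\<Sum>p<m. \<Sum>q<m. cnj (z $ p) * G $$ (p,q) * z $ q)"

lemma qf_vnorm: assumes "B \<in> carrier_mat N m" "z \<in> carrier_vec m"
  shows "complex_of_real ((vnorm (B *\<^sub>v z))^2) = qf (mat_adjoint B * B) z m"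
proof -
  have "complex_of_real ((vnorm (B *\<^sub>v z))^2) = (\<Sum>l<N. (B *\<^sub>v z) $ l * cnj ((B *\<^sub>v z) $ l))"
    unfolding vnorm_def using assms by (simp add: sum_nonneg cnsq row_scalar)
  also have "\<dots> = (\<Sum>l<N. (\<Sum>q<m. B $$ (l,q) * z $ q) * cnj (\<Sum>p<m. B $$ (l,p) * z $ p))"
    using assms by (intro sum.cong) (auto simp: row_scalar)
  also have "\<dots> = (\<Sum>l<N. \<Sum>p<m. \<Sum>q<m. cnj (z $ p) * (cnj (B $$ (l,p)) * B $$ (l,q)) * z $ q)"
    by (simp add: sum_distrib_left sum_distrib_right algebra_simps)
  also have "\<dots> = (\<Sum>p<m. \<Sum>l<N. \<Sum>q<m. cnj (z $ p) * (cnj (B $$ (l,p)) * B $$ (l,q)) * z $ q)" by (rule sum.swap)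
  also have "\<dots> = (\<Sum>p<m. \<Sum>q<m. \<Sum>l<N. cnj (z $ p) * (cnj (B $$ (l,p)) * B $$ (l,q)) * z $ q)"
    by (intro sum.cong refl sum.swap)
  also have "\<dots> = qf (mat_adjoint B * B) z m"
    unfolding qf_def
  proof (intro sum.cong refl)
    fix p q assume p: "p \<in> {..<m}" and q: "q \<in> {..<m}"
    have "(mat_adjoint B * B) $$ (p,q) = (\<Sum>l<N. cnj (B $$ (l,p)) * B $$ (l,q))"
      using assms p q by (subst adj_mult_entry) auto
    then show "(\<Sum>l<N. cnj (z $ p) * (cnj (B $$ (l,p)) * B $$ (l,q)) * z $ q) = cnj (z $ p) * (mat_adjoint B * B) $$ (p,q) * z $ q"
      by (simp add: sum_distrib_left sum_distrib_right)
  qed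
  finally show ?thesis .
qed

definition dev :: "complex mat \<Rightarrow> nat \<Rightarrow> real" where
  "dev G m = (\<Sum>p<m. \<Sum>q<m. cmod (G $$ (p,q) - (if p = q then 1 else 0)))"

lemma dev_nonneg: "0 \<le> dev G m" by (simp add: dev_def sum_nonneg)

lemma cmod3: "cmod (cnj a * e * b) = cmod e * (cmod a * cmod b)"
  by (simp add: norm_mult)

lemma entry_le_T: "p < m \<Longrightarrow> (cmod (z $ p))^2 \<le> (\<Sum>i<m. (cmod (z $ i))^2)"
  by (rule member_le_sum) auto

lemma qf_lower: assumes "z \<in> carrier_vec m"
  shows "(1 - dev G m) * (\<Sum>i<m. (cmod (z $ i))^2) \<le> Re (qf G z m)"
proof -
  let ?T = "\<Sum>i<m. (cmod (z $ i))^2"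
  let ?E = "\<lambda>p q. G $$ (p,q) - (if p = q then 1 else 0)"
  have "qf G z m = (\<Sum>p<m. \<Sum>q<m. cnj (z $ p) * (if p = q then 1 else 0) * z $ q) + (\<Sum>p<m. \<Sum>q<m. cnj (z $ p) * ?E p q * z $ q)"
    unfolding qf_def by (simp add: sum.distrib[symmetric] algebra_simps)
  also have "(\<Sum>p<m. \<Sum>q<m. cnj (z $ p) * (if p = q then 1 else 0) * z $ q) = (\<Sum>p<m. cnj (z $ p) * z $ p)"
  proof (intro sum.cong refl)
    fix p assume p: "p \<in> {..<m}"
    have "(\<Sum>q<m. cnj (z $ p) * (if p = q then 1 else 0) * z $ q) = (\<Sum>q<m. if p = q then cnj (z $ p) * z $ q else 0)"
      by (intro sum.cong) auto
    also have "\<dots> = cnj (z $ p) * z $ p" using p by simp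
    finally show "(\<Sum>q<m. cnj (z $ p) * (if p = q then 1 else 0) * z $ q) = cnj (z $ p) * z $ p" .
  qed
  also have "\<dots> = of_real ?T" unfolding of_real_sum by (intro sum.cong refl) (simp add: cnsq mult.commute)
  finally have eq: "qf G z m = of_real ?T + (\<Sum>p<m. \<Sum>q<m. cnj (z $ p) * ?E p q * z $ q)" .
  have "cmod (\<Sum>p<m. \<Sum>q<m. cnj (z $ p) * ?E p q * z $ q) \<le> (\<Sum>p<m. \<Sum>q<m. cmod (?E p q) * ?T)"
  proof -
    have "cmod (\<Sum>p<m. \<Sum>q<m. cnj (z $ p) * ?E p q * z $ q) \<le> (\<Sum>p<m. \<Sum>q<m. cmod (cnj (z $ p) * ?E p q * z $ q))"
      by (rule order_trans[OF norm_sum sum_mono[OF norm_sum]])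
    also have "\<dots> \<le> (\<Sum>p<m. \<Sum>q<m. cmod (?E p q) * ?T)"
    proof (intro sum_mono)
      fix p q assume p: "p \<in> {..<m}" and q: "q \<in> {..<m}"
      have "cmod (z $ p) * cmod (z $ q) \<le> ((cmod (z $ p))^2 + (cmod (z $ q))^2) / 2"
        using sum_squares_bound[of "cmod (z $ p)" "cmod (z $ q)"] by (simp add: power2_eq_square field_simps)
      also have "\<dots> \<le> (?T + ?T) / 2" using entry_le_T[of p m z] entry_le_T[of q m z] p q by simp
      finally have "cmod (z $ p) * cmod (z $ q) \<le> ?T" by simp
      then have "cmod (?E p q) * (cmod (z $ p) * cmod (z $ q)) \<le> cmod (?E p q) * ?T"
        by (intro mult_left_mono) simp_all
      then show "cmod (cnj (z $ p) * ?E p q * z $ q) \<le> cmod (?E p q) * ?T"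
        by (simp only: cmod3)
    qed
    finally show ?thesis .
  qed
  also have "\<dots> = dev G m * ?T" by (simp add: dev_def sum_distrib_right)
  finally have b: "cmod (\<Sum>p<m. \<Sum>q<m. cnj (z $ p) * ?E p q * z $ q) \<le> dev G m * ?T" .
  have "Re (qf G z m) = ?T + Re (\<Sum>p<m. \<Sum>q<m. cnj (z $ p) * ?E p q * z $ q)" unfolding eq by simp
  moreover have "- dev G m * ?T \<le> Re (\<Sum>p<m. \<Sum>q<m. cnj (z $ p) * ?E p q * z $ q)"
    using b abs_Re_le_cmod[of "\<Sum>p<m. \<Sum>q<m. cnj (z $ p) * ?E p q * z $ q"] by linarith
  ultimately show ?thesis by (simp add: algebra_simps)
qed

lemma qf_mult: assumes "G \<in> carrier_mat m m" "z \<in> carrier_vec m"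
  shows "qf G z m = (\<Sum>p<m. cnj (z $ p) * (G *\<^sub>v z) $ p)"
  unfolding qf_def using assms
  by (intro sum.cong refl) (simp add: row_scalar sum_distrib_left mult.assoc)

lemma T_zero: assumes "z \<in> carrier_vec m" "(\<Sum>i<m. (cmod (z $ i))^2) \<le> 0"
  shows "z = 0\<^sub>v m"
proof -
  have "\<forall>i\<in>{..<m}. (cmod (z $ i))^2 = 0"
    using assms(2) sum_nonneg_eq_0_iff[of "{..<m}" "\<lambda>i. (cmod (z $ i))^2"]
    by (simp add: order_antisym sum_nonneg)
  then show ?thesis using assms(1) by (intro eq_vecI) auto
qed

lemma sum_abs_dev: assumes G: "G \<in> carrier_mat m m" and z: "z \<in> carrier_vec m"
  shows "(\<Sum>p<m. cmod ((z - G *\<^sub>v z) $ p)) \<le> dev G m * sqrt (\<Sum>i<m. (cmod (z $ i))^2)"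
proof -
  let ?T = "\<Sum>i<m. (cmod (z $ i))^2"
  let ?E = "\<lambda>p q. G $$ (p,q) - (if p = q then 1 else 0)"
  have zq: "cmod (z $ q) \<le> sqrt ?T" if "q < m" for q
    using entry_le_T[OF that, of z] by (simp add: real_le_rsqrt)
  have "(\<Sum>p<m. cmod ((z - G *\<^sub>v z) $ p)) \<le> (\<Sum>p<m. \<Sum>q<m. cmod (?E p q) * sqrt ?T)"
  proof (rule sum_mono)
    fix p assume p: "p \<in> {..<m}"
    have "(z - G *\<^sub>v z) $ p = z $ p - (\<Sum>q<m. G $$ (p,q) * z $ q)"
      using p G z by (simp add: row_scalar)
    also have "z $ p = (\<Sum>q<m. (if p = q then 1 else 0) * z $ q)"
    proof -
      have "(\<Sum>q<m. (if p = q then 1 else 0) * z $ q) = (\<Sum>q<m. if p = q then z $ q else 0)"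
        by (intro sum.cong) auto
      then show ?thesis using p by simp
    qed
    also have "(\<Sum>q<m. (if p = q then 1 else 0) * z $ q) - (\<Sum>q<m. G $$ (p,q) * z $ q) = - (\<Sum>q<m. ?E p q * z $ q)"
      by (simp only: sum_subtractf[symmetric] sum_negf[symmetric]) (intro sum.cong refl, simp add: algebra_simps)
    finally have "cmod ((z - G *\<^sub>v z) $ p) = cmod (\<Sum>q<m. ?E p q * z $ q)" by simp
    also have "\<dots> \<le> (\<Sum>q<m. cmod (?E p q) * cmod (z $ q))"
      by (rule order_trans[OF norm_sum]) (simp add: norm_mult)
    also have "\<dots> \<le> (\<Sum>q<m. cmod (?E p q) * sqrt ?T)"
      using zq by (intro sum_mono mult_left_mono) auto
    finally show "cmod ((z - G *\<^sub>v z) $ p) \<le> (\<Sum>q<m. cmod (?E p q) * sqrt ?T)" .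
  qed
  also have "\<dots> = dev G m * sqrt ?T" by (simp add: dev_def sum_distrib_right)
  finally show ?thesis .
qed

lemma proj_bound:
  fixes Bi :: "complex mat"
  assumes Bi: "Bi \<in> carrier_mat N m" and b: "bnd Bi" and e: "dev (mat_adjoint Bi * Bi) m \<le> 1/2"
  shows "is_orth_proj (proj_colspace Bi) (colspace Bi) N \<and>
    (\<forall>x\<in>carrier_vec N. vnorm ((proj_colspace Bi - Bi * mat_adjoint Bi) *\<^sub>v x) \<le> 2 * dev (mat_adjoint Bi * Bi) m * vnorm x)"
proof -
  define G where "G = mat_adjoint Bi * Bi"
  have aB: "mat_adjoint Bi \<in> carrier_mat m N" using Bi by (intro carrier_matI) auto
  have Gc: "G \<in> carrier_mat m m" using Bi aB by (simp add: G_def)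
  let ?e = "dev G m"
  have e': "?e \<le> 1/2" using e by (simp add: G_def)
  have lowT: "(\<Sum>i<m. (cmod (z $ i))^2) \<le> 2 * Re (qf G z m)" if z: "z \<in> carrier_vec m" for z
  proof -
    have "(1 - ?e) * (\<Sum>i<m. (cmod (z $ i))^2) \<le> Re (qf G z m)" by (rule qf_lower[OF z])
    moreover have "(1/2) * (\<Sum>i<m. (cmod (z $ i))^2) \<le> (1 - ?e) * (\<Sum>i<m. (cmod (z $ i))^2)"
      using e' by (intro mult_right_mono) (simp_all add: sum_nonneg)
    ultimately show ?thesis by linarith
  qed
  have inj: "z = 0\<^sub>v m" if z: "z \<in> carrier_vec m" and Gz: "G *\<^sub>v z = 0\<^sub>v m" for z
  proof -
    have "qf G z m = 0" unfolding qf_mult[OF Gc z] Gz by simp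
    then show ?thesis using lowT[OF z] T_zero[OF z] by simp
  qed
  have "Determinant.det G \<noteq> 0" using inj unfolding det_0_iff_vec_prod_zero_field[OF Gc] by blast
  from det_non_zero_imp_unit[OF Gc this, of "()"]
  obtain K where Kc: "K \<in> carrier_mat m m" and KG: "K * G = 1\<^sub>m m" and GK: "G * K = 1\<^sub>m m"
    unfolding Units_def ring_mat_def by auto
  define P where "P = Bi * K * mat_adjoint Bi"
  have Pc: "P \<in> carrier_mat N N" using Bi Kc aB by (simp add: P_def)
  have Px: "P *\<^sub>v x = Bi *\<^sub>v (K *\<^sub>v (mat_adjoint Bi *\<^sub>v x))" if x: "x \<in> carrier_vec N" for x
    using Bi Kc aB x by (simp add: P_def assoc_mult_mat_vec[of _ N m _ N])
  have adjP: "mat_adjoint Bi *\<^sub>v (P *\<^sub>v x) = mat_adjoint Bi *\<^sub>v x" if x: "x \<in> carrier_vec N" for x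
  proof -
    have "mat_adjoint Bi *\<^sub>v (P *\<^sub>v x) = (G * K) *\<^sub>v (mat_adjoint Bi *\<^sub>v x)"
      using Bi Kc aB x Gc by (simp add: Px G_def assoc_mult_mat_vec[of _ m N _ m] assoc_mult_mat_vec[of _ m m _ m])
    then show ?thesis using GK aB x by simp
  qed
  have orth: "cinner (x - P *\<^sub>v x) w = 0" if x: "x \<in> carrier_vec N" and w: "w \<in> colspace Bi" for x w
  proof -
    obtain u where u: "u \<in> carrier_vec (dim_col Bi)" and wu: "w = Bi *\<^sub>v u" using w unfolding colspace_def by blast
    then have u: "u \<in> carrier_vec m" using Bi by simp
    have xc: "x - P *\<^sub>v x \<in> carrier_vec N" using x Pc by simp
    have "mat_adjoint Bi *\<^sub>v (x - P *\<^sub>v x) = mat_adjoint Bi *\<^sub>v x - mat_adjoint Bi *\<^sub>v (P *\<^sub>v x)"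
      using aB x Pc by (simp add: mult_minus_distrib_mat_vec)
    also have "\<dots> = 0\<^sub>v m" using adjP[OF x] aB x by simp
    finally have z: "mat_adjoint Bi *\<^sub>v (x - P *\<^sub>v x) = 0\<^sub>v m" .
    show ?thesis unfolding wu cinner_mult[OF Bi u xc] z using u by simp
  qed
  have isP: "is_orth_proj P (colspace Bi) N"
    unfolding is_orth_proj_def
  proof (intro conjI ballI Pc)
    fix x :: "complex vec" assume x: "x \<in> carrier_vec N"
    have "K *\<^sub>v (mat_adjoint Bi *\<^sub>v x) \<in> carrier_vec (dim_col Bi)" using Kc aB x Bi by simp
    then show "P *\<^sub>v x \<in> colspace Bi" unfolding colspace_def using Px[OF x] by blast
    fix w assume "w \<in> colspace Bi"
    then show "cinner (x - P *\<^sub>v x) w = 0" using orth[OF x] by blast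
  qed
  have Wsub: "colspace Bi \<subseteq> carrier_vec N"
  proof
    fix w assume "w \<in> colspace Bi"
    then obtain u where wu: "w = Bi *\<^sub>v u" unfolding colspace_def by blast
    have "dim_vec w = N" unfolding wu using carrier_matD(1)[OF Bi] by (simp only: dim_mult_mat_vec)
    then show "w \<in> carrier_vec N" by (rule carrier_vecI)
  qed
  have Wminus: "u - v \<in> colspace Bi" if uW: "u \<in> colspace Bi" and vW: "v \<in> colspace Bi" for u v
  proof -
    obtain a where a: "a \<in> carrier_vec (dim_col Bi)" "u = Bi *\<^sub>v a" using uW unfolding colspace_def by blast
    obtain c where c: "c \<in> carrier_vec (dim_col Bi)" "v = Bi *\<^sub>v c" using vW unfolding colspace_def by blast
    have "u - v = Bi *\<^sub>v (a - c)" using a c Bi by (simp add: mult_minus_distrib_mat_vec)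
    moreover have "a - c \<in> carrier_vec (dim_col Bi)" using a c by simp
    ultimately show ?thesis unfolding colspace_def by blast
  qed
  have dr: "dim_row Bi = N" using Bi by (rule carrier_matD)
  have PP: "proj_colspace Bi = P"
    unfolding proj_colspace_def dr
  proof (rule the_equality)
    show "is_orth_proj P (colspace Bi) N" by (rule isP)
  next
    fix P' assume "is_orth_proj P' (colspace Bi) N"
    then show "P' = P" by (rule orth_proj_unique[OF _ isP Wsub Wminus])
  qed
  have bound: "vnorm ((P - Bi * mat_adjoint Bi) *\<^sub>v x) \<le> 2 * ?e * vnorm x" if x: "x \<in> carrier_vec N" for x
  proof -
    define a where "a = mat_adjoint Bi *\<^sub>v x"
    define z where "z = K *\<^sub>v a"
    have ac: "a \<in> carrier_vec m" using aB x by (simp add: a_def)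
    have zc: "z \<in> carrier_vec m" using Kc ac by (simp add: z_def)
    have Gz: "G *\<^sub>v z = a" using GK Gc Kc ac by (simp add: z_def flip: assoc_mult_mat_vec[of _ m m _ m])
    let ?T = "\<Sum>i<m. (cmod (z $ i))^2"
    let ?y = "Bi *\<^sub>v z"
    have yP: "?y = P *\<^sub>v x" using Px[OF x] by (simp add: z_def a_def)
    have "(P - Bi * mat_adjoint Bi) *\<^sub>v x = P *\<^sub>v x - (Bi * mat_adjoint Bi) *\<^sub>v x"
      using Pc Bi aB x by (intro minus_mult_distrib_mat_vec) auto
    also have "(Bi * mat_adjoint Bi) *\<^sub>v x = Bi *\<^sub>v (G *\<^sub>v z)" using Bi aB x by (simp add: Gz a_def)
    also have "P *\<^sub>v x - Bi *\<^sub>v (G *\<^sub>v z) = Bi *\<^sub>v (z - G *\<^sub>v z)"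
      unfolding yP[symmetric] using Bi zc Gc by (simp add: mult_minus_distrib_mat_vec)
    finally have eq: "(P - Bi * mat_adjoint Bi) *\<^sub>v x = Bi *\<^sub>v (z - G *\<^sub>v z)" .
    have "vnorm ((P - Bi * mat_adjoint Bi) *\<^sub>v x) \<le> (\<Sum>p<m. cmod ((z - G *\<^sub>v z) $ p))"
      unfolding eq using bnd_mult_vnorm[OF b, of "z - G *\<^sub>v z"] Bi zc Gc by simp
    also have "\<dots> \<le> ?e * sqrt ?T" by (rule sum_abs_dev[OF Gc zc])
    also have "sqrt ?T \<le> sqrt 2 * vnorm x"
    proof -
      have "Re (qf G z m) = (vnorm ?y)^2"
        using qf_vnorm[OF Bi zc] unfolding G_def by (metis Re_complex_of_real)
      then have "?T \<le> 2 * (vnorm ?y)^2" using lowT[OF zc] by simp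
      moreover have "vnorm ?y \<le> vnorm x"
      proof (rule pythag)
        show "dim_vec x = dim_vec ?y" using x Bi by simp
        have "z \<in> carrier_vec (dim_col Bi)" using zc Bi by simp
        then have "?y \<in> colspace Bi" unfolding colspace_def by blast
        then show "cinner (x - ?y) ?y = 0" using orth[OF x] yP by simp
      qed
      ultimately have "?T \<le> 2 * (vnorm x)^2"
        using vnorm_nonneg[of ?y] by (meson order_trans mult_left_mono power_mono zero_le_numeral)
      then have "sqrt ?T \<le> sqrt (2 * (vnorm x)^2)" by (rule real_sqrt_le_mono)
      also have "\<dots> = sqrt 2 * vnorm x" using vnorm_nonneg[of x] by (simp add: real_sqrt_mult)
      finally show ?thesis .
    qed
    then have "?e * sqrt ?T \<le> ?e * (sqrt 2 * vnorm x)" using dev_nonneg by (intro mult_left_mono) auto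
    also have "\<dots> \<le> ?e * (2 * vnorm x)"
      using dev_nonneg vnorm_nonneg[of x] sqrt2_less_2 by (intro mult_left_mono mult_right_mono) auto
    finally show ?thesis by simp
  qed
  show ?thesis using isP bound unfolding PP G_def by blast
qed

lemma adj_carrier[simp]: "A \<in> carrier_mat m n \<Longrightarrow> mat_adjoint A \<in> carrier_mat n m"
  by (intro carrier_matI) auto

lemma adj_adj[simp]: fixes A :: "complex mat" shows "mat_adjoint (mat_adjoint A) = A"
  by (intro eq_matI) auto

lemma adj_mult: fixes A B :: "complex mat" assumes "A \<in> carrier_mat m n" "B \<in> carrier_mat n p"
  shows "mat_adjoint (A * B) = mat_adjoint B * mat_adjoint A"
proof (rule eq_matI)
  fix i j assume ij: "i < dim_row (mat_adjoint B * mat_adjoint A)" "j < dim_col (mat_adjoint B * mat_adjoint A)"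
  then have i: "i < p" and j: "j < m" using assms by auto
  have "mat_adjoint (A * B) $$ (i,j) = cnj ((A * B) $$ (j,i))" using assms i j by simp
  also have "\<dots> = cnj (\<Sum>l<n. A $$ (j,l) * B $$ (l,i))" using assms i j by (subst mult_entry) auto
  also have "\<dots> = (\<Sum>l<n. mat_adjoint B $$ (i,l) * mat_adjoint A $$ (l,j))"
    unfolding cnj_sum using assms i j by (intro sum.cong refl) (simp add: mult.commute)
  also have "\<dots> = (mat_adjoint B * mat_adjoint A) $$ (i,j)" using assms i j by (subst mult_entry) auto
  finally show "mat_adjoint (A * B) $$ (i,j) = (mat_adjoint B * mat_adjoint A) $$ (i,j)" .
qed (use assms in auto)

lemma adj_diag_real: "mat_adjoint (mat_diag r (\<lambda>k. complex_of_real (f k))) = mat_diag r (\<lambda>k. complex_of_real (f k))"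
  by (intro eq_matI) (auto simp: mat_diag_def)

lemma diag_mult: "mat_diag r f * mat_diag r g = mat_diag r (\<lambda>k. f k * (g k :: complex))"
  by (simp add: mat_diag_mult_left)

lemma diag_one: "mat_diag r (\<lambda>k. 1 :: complex) = 1\<^sub>m r"
  by (intro eq_matI) (auto simp: mat_diag_def)

lemma svd_algebra:
  fixes B S U V :: "complex mat" and \<sigma> :: "nat \<Rightarrow> real"
  assumes B: "B \<in> carrier_mat N r" and S: "S \<in> carrier_mat n r" and U: "U \<in> carrier_mat N r"
    and V: "V \<in> carrier_mat n r" and UU: "mat_adjoint U * U = 1\<^sub>m r" and VV: "mat_adjoint V * V = 1\<^sub>m r"
    and pos: "\<forall>k<r. 0 < \<sigma> k"
    and eq: "B * mat_adjoint S = U * mat_diag r (\<lambda>k. complex_of_real (\<sigma> k)) * mat_adjoint V"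
  defines "W \<equiv> mat_adjoint S * V * mat_diag r (\<lambda>k. complex_of_real (1 / \<sigma> k))"
  shows "U = B * W" "mat_adjoint W * (mat_adjoint B * B) * W = 1\<^sub>m r"
    "mat_adjoint S * S * (mat_adjoint B * B) * W = W * mat_diag r (\<lambda>k. complex_of_real ((\<sigma> k)^2))"
    "W \<in> carrier_mat r r"
proof -
  define \<Sigma> where "\<Sigma> = mat_diag r (\<lambda>k. complex_of_real (\<sigma> k))"
  define \<Sigma>i where "\<Sigma>i = mat_diag r (\<lambda>k. complex_of_real (1 / \<sigma> k))"
  have Sc: "\<Sigma> \<in> carrier_mat r r" "\<Sigma>i \<in> carrier_mat r r" by (simp_all add: \<Sigma>_def \<Sigma>i_def)
  have aS: "mat_adjoint S \<in> carrier_mat r n" and aV: "mat_adjoint V \<in> carrier_mat r n"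
    and aU: "mat_adjoint U \<in> carrier_mat r N" and aB: "mat_adjoint B \<in> carrier_mat r N" using S V U B by auto
  have SSi: "\<Sigma> * \<Sigma>i = 1\<^sub>m r"
    unfolding \<Sigma>_def \<Sigma>i_def diag_mult diag_one[symmetric]
    using pos by (intro eq_matI) (auto simp: mat_diag_def simp flip: of_real_mult)
  have Wdef: "W = mat_adjoint S * V * \<Sigma>i" by (simp add: W_def \<Sigma>i_def)
  have Wc: "W \<in> carrier_mat r r" unfolding Wdef using aS V Sc by simp
  then show "W \<in> carrier_mat r r" .
  have BW: "B * W = U"
  proof -
    have "B * W = (B * mat_adjoint S) * V * \<Sigma>i" unfolding Wdef
      using B aS V Sc by (simp add: assoc_mult_mat[of _ N r _ n _ r] assoc_mult_mat[of _ N r _ r _ r] assoc_mult_mat[of _ r n _ r _ r])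
    also have "\<dots> = U * \<Sigma> * mat_adjoint V * V * \<Sigma>i" unfolding eq \<Sigma>_def[symmetric] ..
    also have "U * \<Sigma> * mat_adjoint V * V = U * \<Sigma> * (mat_adjoint V * V)"
      using U Sc aV V by (intro assoc_mult_mat[of _ N r]) auto
    also have "\<dots> = U * \<Sigma>" unfolding VV using U Sc by simp
    also have "U * \<Sigma> * \<Sigma>i = U * (\<Sigma> * \<Sigma>i)" using U Sc by (intro assoc_mult_mat[of _ N r]) auto
    also have "\<dots> = U" unfolding SSi using U by simp
    finally show ?thesis .
  qed
  then show "U = B * W" by simp
  show "mat_adjoint W * (mat_adjoint B * B) * W = 1\<^sub>m r"
  proof -
    have aW: "mat_adjoint W \<in> carrier_mat r r" using Wc by simp
    have "mat_adjoint W * (mat_adjoint B * B) * W = mat_adjoint W * ((mat_adjoint B * B) * W)"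
      using aW aB B Wc by (intro assoc_mult_mat[of _ r r]) auto
    also have "(mat_adjoint B * B) * W = mat_adjoint B * (B * W)"
      using aB B Wc by (intro assoc_mult_mat[of _ r N]) auto
    also have "mat_adjoint W * (mat_adjoint B * (B * W)) = (mat_adjoint W * mat_adjoint B) * (B * W)"
      using aW aB B Wc by (intro assoc_mult_mat[of _ r r, symmetric]) auto
    also have "mat_adjoint W * mat_adjoint B = mat_adjoint (B * W)" using adj_mult[OF B Wc] by simp
    finally show ?thesis unfolding BW UU .
  qed
  have SB: "S * mat_adjoint B = V * \<Sigma> * mat_adjoint U"
  proof -
    have "S * mat_adjoint B = mat_adjoint (B * mat_adjoint S)" using B aS by (simp add: adj_mult)
    also have "\<dots> = mat_adjoint (U * \<Sigma> * mat_adjoint V)" unfolding eq \<Sigma>_def ..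
    also have "\<dots> = mat_adjoint (mat_adjoint V) * mat_adjoint (U * \<Sigma>)"
      using U Sc aV by (intro adj_mult[of _ N r]) auto
    also have "mat_adjoint (U * \<Sigma>) = mat_adjoint \<Sigma> * mat_adjoint U"
      using U Sc by (intro adj_mult[of _ N r]) auto
    also have "mat_adjoint (mat_adjoint V) * (mat_adjoint \<Sigma> * mat_adjoint U) = V * mat_adjoint \<Sigma> * mat_adjoint U"
      using V Sc aU by (simp add: assoc_mult_mat[of _ n r _ r _ N])
    also have "mat_adjoint \<Sigma> = \<Sigma>" unfolding \<Sigma>_def by (rule adj_diag_real)
    finally show ?thesis .
  qed
  show "mat_adjoint S * S * (mat_adjoint B * B) * W = W * mat_diag r (\<lambda>k. complex_of_real ((\<sigma> k)^2))"
  proof -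
    have SS: "mat_adjoint S * S \<in> carrier_mat r r" and GG: "mat_adjoint B * B \<in> carrier_mat r r"
      and BWc: "B * W \<in> carrier_mat N r" and SaB: "S * mat_adjoint B \<in> carrier_mat n N"
      using aS S aB B Wc by auto
    have VSc: "V * \<Sigma> \<in> carrier_mat n r" and VSU: "V * \<Sigma> * mat_adjoint U \<in> carrier_mat n N"
      and aUU: "mat_adjoint U * U \<in> carrier_mat r r" using V Sc aU U by auto
    have "mat_adjoint S * S * (mat_adjoint B * B) * W = (mat_adjoint S * S) * ((mat_adjoint B * B) * W)"
      using SS GG Wc by (rule assoc_mult_mat)
    also have "(mat_adjoint B * B) * W = mat_adjoint B * (B * W)" using aB B Wc by (rule assoc_mult_mat)
    also have "(mat_adjoint S * S) * (mat_adjoint B * (B * W)) = mat_adjoint S * (S * (mat_adjoint B * (B * W)))"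
      using aS S by (rule assoc_mult_mat[of _ r n _ r _ r]) (use aB BWc in simp)
    also have "S * (mat_adjoint B * (B * W)) = (S * mat_adjoint B) * (B * W)"
      using S aB BWc by (rule assoc_mult_mat[symmetric])
    also have "mat_adjoint S * ((S * mat_adjoint B) * (B * W)) = (mat_adjoint S * (S * mat_adjoint B)) * (B * W)"
      using aS SaB BWc by (rule assoc_mult_mat[symmetric])
    also have "\<dots> = mat_adjoint S * (V * \<Sigma> * mat_adjoint U) * U" unfolding SB BW ..
    also have "\<dots> = mat_adjoint S * (V * \<Sigma> * mat_adjoint U * U)"
      using aS by (rule assoc_mult_mat[of _ r n _ N _ r]) (use VSc VSU aUU aU U in simp_all)
    also have "V * \<Sigma> * mat_adjoint U * U = (V * \<Sigma>) * (mat_adjoint U * U)"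
      by (rule assoc_mult_mat[of _ n r _ N _ r]) (use VSc VSU aUU aU U in simp_all)
    also have "mat_adjoint S * ((V * \<Sigma>) * (mat_adjoint U * U)) = (mat_adjoint S * (V * \<Sigma>)) * (mat_adjoint U * U)"
      by (rule assoc_mult_mat[of _ r n _ r _ r, symmetric]) (use aS VSc aUU in simp_all)
    also have "mat_adjoint S * (V * \<Sigma>) = mat_adjoint S * V * \<Sigma>"
      by (rule assoc_mult_mat[of _ r n _ r _ r, symmetric]) (use aS V Sc in simp_all)
    also have "mat_adjoint S * V * \<Sigma> * (mat_adjoint U * U) = mat_adjoint S * V * \<Sigma>" unfolding UU using aS V Sc by simp
    also have "\<dots> = mat_adjoint S * V * (\<Sigma>i * (\<Sigma> * \<Sigma>))"
    proof -
      have "\<Sigma>i * (\<Sigma> * \<Sigma>) = \<Sigma>"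
        unfolding \<Sigma>_def \<Sigma>i_def diag_mult using pos by (intro eq_matI) (auto simp: mat_diag_def)
      then show ?thesis by simp
    qed
    also have "\<dots> = W * (\<Sigma> * \<Sigma>)" unfolding Wdef
    proof (rule assoc_mult_mat[of _ r r _ r _ r, symmetric])
      show "mat_adjoint S * V \<in> carrier_mat r r" using aS V by simp
      show "\<Sigma>i \<in> carrier_mat r r" "\<Sigma> * \<Sigma> \<in> carrier_mat r r" using Sc by auto
    qed
    also have "\<Sigma> * \<Sigma> = mat_diag r (\<lambda>k. complex_of_real ((\<sigma> k)^2))"
      unfolding \<Sigma>_def diag_mult by (simp add: power2_eq_square)
    finally show ?thesis .
  qed
qed

lemma bounded_mult_zero:
  assumes "eventually (\<lambda>n. cmod (f n) \<le> K) F" "(g \<longlongrightarrow> 0) F"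
  shows "((\<lambda>n. f n * g n :: complex) \<longlongrightarrow> 0) F"
proof (rule Lim_null_comparison)
  show "((\<lambda>n. K * cmod (g n)) \<longlongrightarrow> 0) F"
    using tendsto_mult_right_zero[OF tendsto_norm_zero[OF assms(2)]] .
  show "\<forall>\<^sub>F n in F. norm (f n * g n) \<le> K * cmod (g n)"
    using assms(1) by eventually_elim (simp add: norm_mult mult_right_mono)
qed

lemma dev_lim: assumes "\<forall>a<r. \<forall>b<r. (\<lambda>n. G n $$ (a,b)) \<longlonglongrightarrow> (if a = b then 1 else 0)"
  shows "(\<lambda>n. dev (G n) r) \<longlonglongrightarrow> 0"
proof -
  have "(\<lambda>n. \<Sum>p<r. \<Sum>q<r. cmod (G n $$ (p,q) - (if p = q then 1 else 0))) \<longlonglongrightarrow> (\<Sum>p<r. \<Sum>q<r. 0)"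
  proof (intro tendsto_sum)
    fix p q assume "p \<in> {..<r}" "q \<in> {..<r}"
    then have "(\<lambda>n. G n $$ (p,q) - (if p = q then 1 else 0)) \<longlonglongrightarrow> 0"
      using assms tendsto_diff[OF _ tendsto_const, of "\<lambda>n. G n $$ (p,q)" "if p = q then 1 else 0" sequentially "if p = q then 1 else 0"]
      by auto
    then show "(\<lambda>n. cmod (G n $$ (p,q) - (if p = q then 1 else 0))) \<longlonglongrightarrow> 0" by (rule tendsto_norm_zero)
  qed
  then show ?thesis by (simp add: dev_def)
qed

lemma adjGW_entry: fixes W G :: "complex mat"
  assumes "W \<in> carrier_mat r r" "G \<in> carrier_mat r r" "k < r"
  shows "(mat_adjoint W * G * W) $$ (k,k) = qf G (col W k) r"
proof -
  have aW: "mat_adjoint W \<in> carrier_mat r r" using assms by simp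
  have "(mat_adjoint W * G * W) $$ (k,k) = (\<Sum>q<r. (mat_adjoint W * G) $$ (k,q) * W $$ (q,k))"
    using assms aW by (subst mult_entry) auto
  also have "\<dots> = (\<Sum>q<r. (\<Sum>p<r. cnj (W $$ (p,k)) * G $$ (p,q)) * W $$ (q,k))"
    using assms aW by (intro sum.cong refl) (subst mult_entry, auto)
  also have "\<dots> = (\<Sum>q<r. \<Sum>p<r. cnj (W $$ (p,k)) * G $$ (p,q) * W $$ (q,k))"
    by (simp add: sum_distrib_right)
  also have "\<dots> = (\<Sum>p<r. \<Sum>q<r. cnj (W $$ (p,k)) * G $$ (p,q) * W $$ (q,k))" by (rule sum.swap)
  also have "\<dots> = qf G (col W k) r" unfolding qf_def using assms by (intro sum.cong refl) auto
  finally show ?thesis .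
qed

lemma W_bound: fixes W G :: "complex mat"
  assumes W: "W \<in> carrier_mat r r" and G: "G \<in> carrier_mat r r" and eq: "mat_adjoint W * G * W = 1\<^sub>m r"
    and d: "dev G r \<le> 1/2" and ak: "a < r" "k < r"
  shows "cmod (W $$ (a,k)) \<le> 2"
proof -
  let ?z = "col W k"
  have zc: "?z \<in> carrier_vec r" by (rule carrier_vecI) (use W in simp)
  have "qf G ?z r = 1" using adjGW_entry[OF W G ak(2)] eq ak by simp
  then have "(1 - dev G r) * (\<Sum>i<r. (cmod (?z $ i))^2) \<le> 1" using qf_lower[OF zc, of G] by simp
  moreover have "(1/2) * (\<Sum>i<r. (cmod (?z $ i))^2) \<le> (1 - dev G r) * (\<Sum>i<r. (cmod (?z $ i))^2)"
    using d by (intro mult_right_mono) (simp_all add: sum_nonneg)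
  ultimately have T: "(\<Sum>i<r. (cmod (?z $ i))^2) \<le> 2" by linarith
  have "(cmod (W $$ (a,k)))^2 \<le> 2" using entry_le_T[OF ak(1), of ?z] T W ak by simp
  then have "cmod (W $$ (a,k)) \<le> sqrt 2" by (simp add: real_le_rsqrt)
  also have "sqrt 2 \<le> 2" using sqrt2_less_2 by simp
  finally show ?thesis .
qed

lemma W_analysis:
  fixes G H W :: "nat \<Rightarrow> complex mat" and sig :: "nat \<Rightarrow> nat \<Rightarrow> real" and Od :: "nat \<Rightarrow> real"
    and blk :: "nat \<Rightarrow> nat"
  assumes ev: "eventually (\<lambda>n. G n \<in> carrier_mat r r \<and> H n \<in> carrier_mat r r \<and> W n \<in> carrier_mat r r \<and>
      mat_adjoint (W n) * G n * W n = 1\<^sub>m r \<and>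
      H n * G n * W n = W n * mat_diag r (\<lambda>k. complex_of_real ((sig n k)^2))) sequentially"
    and G_lim: "\<forall>a<r. \<forall>b<r. (\<lambda>n. G n $$ (a,b)) \<longlonglongrightarrow> (if a = b then 1 else 0)"
    and H_lim: "\<forall>a<r. \<forall>b<r. (\<lambda>n. H n $$ (a,b)) \<longlonglongrightarrow> (if a = b then complex_of_real ((Od a)^2) else 0)"
    and sig_lim: "\<forall>k<r. (\<lambda>n. sig n k) \<longlonglongrightarrow> Od k"
    and sep: "\<forall>a<r. \<forall>k<r. blk a \<noteq> blk k \<longrightarrow> (Od a)^2 \<noteq> (Od k)^2"
  shows "eventually (\<lambda>n. \<forall>a<r. \<forall>k<r. cmod (W n $$ (a,k)) \<le> 2) sequentially"
    and "\<forall>a<r. \<forall>k<r. blk a \<noteq> blk k \<longrightarrow> (\<lambda>n. W n $$ (a,k)) \<longlonglongrightarrow> 0"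
    and "\<forall>a<r. \<forall>b<r. (\<lambda>n. (W n * mat_adjoint (W n)) $$ (a,b)) \<longlonglongrightarrow> (if a = b then 1 else 0)"
proof -
  have devG: "eventually (\<lambda>n. dev (G n) r \<le> 1/2) sequentially"
    using order_tendstoD(2)[OF dev_lim[OF G_lim], of "1/2"] by (auto elim: eventually_mono)
  show bnd: "eventually (\<lambda>n. \<forall>a<r. \<forall>k<r. cmod (W n $$ (a,k)) \<le> 2) sequentially"
    using ev devG by eventually_elim (auto intro: W_bound)
  have bnd1: "eventually (\<lambda>n. cmod (W n $$ (a,k)) \<le> 2) sequentially" if "a < r" "k < r" for a k
    using bnd by eventually_elim (use that in auto)
  have bndc: "eventually (\<lambda>n. cmod (cnj (W n $$ (a,k))) \<le> 2) sequentially" if "a < r" "k < r" for a k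
    using bnd1[OF that] by simp
  have HG_lim: "(\<lambda>n. (H n * G n) $$ (a,m)) \<longlonglongrightarrow> (if a = m then complex_of_real ((Od a)^2) else 0)"
    if am: "a < r" "m < r" for a m
  proof -
    have "(\<lambda>n. \<Sum>p<r. H n $$ (a,p) * G n $$ (p,m)) \<longlonglongrightarrow>
        (\<Sum>p<r. (if a = p then complex_of_real ((Od a)^2) else 0) * (if p = m then 1 else 0))"
      using H_lim G_lim am by (intro tendsto_sum tendsto_mult) auto
    also have "(\<Sum>p<r. (if a = p then complex_of_real ((Od a)^2) else 0) * (if p = m then 1 else 0)) =
        (if a = m then complex_of_real ((Od a)^2) else 0)"
    proof -
      have "(\<Sum>p<r. (if a = p then complex_of_real ((Od a)^2) else 0) * (if p = m then 1 else 0)) =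
          (\<Sum>p<r. if p = a then (if a = m then complex_of_real ((Od a)^2) else 0) else 0)"
        by (intro sum.cong) auto
      then show ?thesis using am by simp
    qed
    finally have lim: "(\<lambda>n. \<Sum>p<r. H n $$ (a,p) * G n $$ (p,m)) \<longlonglongrightarrow> (if a = m then complex_of_real ((Od a)^2) else 0)" .
    show ?thesis
    proof (rule Lim_transform_eventually[OF lim])
      show "\<forall>\<^sub>F n in sequentially. (\<Sum>p<r. H n $$ (a,p) * G n $$ (p,m)) = (H n * G n) $$ (a,m)"
        using ev by eventually_elim (use am in \<open>subst mult_entry, auto\<close>)
    qed
  qed
  show off: "\<forall>a<r. \<forall>k<r. blk a \<noteq> blk k \<longrightarrow> (\<lambda>n. W n $$ (a,k)) \<longlonglongrightarrow> 0"
  proof (intro allI impI)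
    fix a k assume a: "a < r" and k: "k < r" and bk: "blk a \<noteq> blk k"
    define R where "R n = (\<Sum>m<r. ((H n * G n) $$ (a,m) - (if a = m then complex_of_real ((Od a)^2) else 0)) * W n $$ (m,k))" for n
    define d where "d n = complex_of_real ((sig n k)^2) - complex_of_real ((Od a)^2)" for n
    have R0: "R \<longlonglongrightarrow> 0"
    proof -
      have "(\<lambda>n. \<Sum>m<r. W n $$ (m,k) * ((H n * G n) $$ (a,m) - (if a = m then complex_of_real ((Od a)^2) else 0))) \<longlonglongrightarrow> (\<Sum>m<r. 0)"
      proof (intro tendsto_sum)
        fix m assume m: "m \<in> {..<r}"
        have m': "m < r" using m by simp
        have "(\<lambda>n. (H n * G n) $$ (a,m) - (if a = m then complex_of_real ((Od a)^2) else 0)) \<longlonglongrightarrow>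
            (if a = m then complex_of_real ((Od a)^2) else 0) - (if a = m then complex_of_real ((Od a)^2) else 0)"
          by (intro tendsto_diff HG_lim[OF a m'] tendsto_const)
        then have "(\<lambda>n. (H n * G n) $$ (a,m) - (if a = m then complex_of_real ((Od a)^2) else 0)) \<longlonglongrightarrow> 0"
          by simp
        then show "(\<lambda>n. W n $$ (m,k) * ((H n * G n) $$ (a,m) - (if a = m then complex_of_real ((Od a)^2) else 0))) \<longlonglongrightarrow> 0"
          using bnd1[of m k] m k by (intro bounded_mult_zero) auto
      qed
      then show ?thesis unfolding R_def by (simp add: mult.commute)
    qed
    have dlim: "d \<longlonglongrightarrow> complex_of_real ((Od k)^2) - complex_of_real ((Od a)^2)"
      unfolding d_def using sig_lim k by (intro tendsto_intros) auto
    have dne: "complex_of_real ((Od k)^2) - complex_of_real ((Od a)^2) \<noteq> 0"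
      using sep a k bk by (metis eq_iff_diff_eq_0 of_real_eq_iff)
    have eqn: "eventually (\<lambda>n. W n $$ (a,k) = R n / d n) sequentially"
    proof -
      have "eventually (\<lambda>n. d n \<noteq> 0) sequentially" using tendsto_imp_eventually_ne[OF dlim dne] .
      then show ?thesis using ev
      proof eventually_elim
        case (elim n)
        then have Wc: "W n \<in> carrier_mat r r" and Gc: "G n \<in> carrier_mat r r" and Hc: "H n \<in> carrier_mat r r"
          and eig: "H n * G n * W n = W n * mat_diag r (\<lambda>k. complex_of_real ((sig n k)^2))" by auto
        have "(H n * G n * W n) $$ (a,k) = (\<Sum>m<r. (H n * G n) $$ (a,m) * W n $$ (m,k))"
          using Wc Gc Hc a k by (subst mult_entry) auto
        moreover have "(W n * mat_diag r (\<lambda>k. complex_of_real ((sig n k)^2))) $$ (a,k) = W n $$ (a,k) * complex_of_real ((sig n k)^2)"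
          using Wc a k by (simp add: mat_diag_mult_right)
        ultimately have e1: "(\<Sum>m<r. (H n * G n) $$ (a,m) * W n $$ (m,k)) = W n $$ (a,k) * complex_of_real ((sig n k)^2)"
          using eig by simp
        have e2: "(\<Sum>m<r. (if a = m then complex_of_real ((Od a)^2) else 0) * W n $$ (m,k)) = complex_of_real ((Od a)^2) * W n $$ (a,k)"
        proof -
          have "(\<Sum>m<r. (if a = m then complex_of_real ((Od a)^2) else 0) * W n $$ (m,k)) = (\<Sum>m<r. if m = a then complex_of_real ((Od a)^2) * W n $$ (a,k) else 0)"
            by (intro sum.cong) auto
          then show ?thesis using a by simp
        qed
        have "R n = (\<Sum>m<r. (H n * G n) $$ (a,m) * W n $$ (m,k)) - (\<Sum>m<r. (if a = m then complex_of_real ((Od a)^2) else 0) * W n $$ (m,k))"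
          unfolding R_def by (simp add: sum_subtractf[symmetric] algebra_simps)
        also have "\<dots> = W n $$ (a,k) * d n" unfolding e1 e2 d_def by (simp add: algebra_simps)
        finally show ?case using elim by simp
      qed
    qed
    have "(\<lambda>n. R n / d n) \<longlonglongrightarrow> 0 / (complex_of_real ((Od k)^2) - complex_of_real ((Od a)^2))"
      by (rule tendsto_divide[OF R0 dlim dne])
    then have "(\<lambda>n. R n / d n) \<longlonglongrightarrow> 0" by simp
    then show "(\<lambda>n. W n $$ (a,k)) \<longlonglongrightarrow> 0"
    proof (rule Lim_transform_eventually)
      show "\<forall>\<^sub>F n in sequentially. R n / d n = W n $$ (a,k)" using eqn by eventually_elim simp
    qed
  qed
  show "\<forall>a<r. \<forall>b<r. (\<lambda>n. (W n * mat_adjoint (W n)) $$ (a,b)) \<longlonglongrightarrow> (if a = b then 1 else 0)"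
  proof (intro allI impI)
    fix a b assume a: "a < r" and b: "b < r"
    define Y where "Y n = W n * mat_adjoint (W n)" for n
    have Ybnd: "eventually (\<lambda>n. cmod (Y n $$ (a,m)) \<le> 4 * real r) sequentially" if m: "m < r" for m
      using ev bnd
    proof eventually_elim
      case (elim n)
      then have Wc: "W n \<in> carrier_mat r r" by auto
      have "Y n $$ (a,m) = (\<Sum>k<r. W n $$ (a,k) * cnj (W n $$ (m,k)))"
        unfolding Y_def using Wc a m by (subst mult_entry) auto
      then have "cmod (Y n $$ (a,m)) \<le> (\<Sum>k<r. cmod (W n $$ (a,k)) * cmod (W n $$ (m,k)))"
        by (simp add: order_trans[OF norm_sum] norm_mult)
      also have "\<dots> \<le> (\<Sum>k<r. 2 * 2)"
        using elim a m by (intro sum_mono mult_mono) auto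
      finally show ?case by simp
    qed
    have eqn: "eventually (\<lambda>n. Y n $$ (a,b) = (if a = b then 1 else 0) - (\<Sum>m<r. Y n $$ (a,m) * (G n $$ (m,b) - (if m = b then 1 else 0)))) sequentially"
      using ev
    proof eventually_elim
      case (elim n)
      then have Wc: "W n \<in> carrier_mat r r" and Gc: "G n \<in> carrier_mat r r"
        and eq: "mat_adjoint (W n) * G n * W n = 1\<^sub>m r" by auto
      have aWG: "mat_adjoint (W n) * G n \<in> carrier_mat r r" by (rule mult_carrier_mat[OF adj_carrier[OF Wc] Gc])
      have "W n * (mat_adjoint (W n) * G n) = 1\<^sub>m r"
        by (rule mat_mult_left_right_inverse[OF aWG Wc eq])
      moreover have "W n * (mat_adjoint (W n) * G n) = Y n * G n"
        unfolding Y_def by (rule assoc_mult_mat[OF Wc adj_carrier[OF Wc] Gc, symmetric])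
      ultimately have YG: "Y n * G n = 1\<^sub>m r" by simp
      have Yc: "Y n \<in> carrier_mat r r" unfolding Y_def by (rule mult_carrier_mat[OF Wc adj_carrier[OF Wc]])
      have "(Y n * G n) $$ (a,b) = (\<Sum>m<r. Y n $$ (a,m) * G n $$ (m,b))"
        using Yc Gc a b by (subst mult_entry) auto
      then have s: "(\<Sum>m<r. Y n $$ (a,m) * G n $$ (m,b)) = (if a = b then 1 else 0)" using YG a b by simp
      have "(\<Sum>m<r. Y n $$ (a,m) * (G n $$ (m,b) - (if m = b then 1 else 0))) = (\<Sum>m<r. Y n $$ (a,m) * G n $$ (m,b)) - (\<Sum>m<r. Y n $$ (a,m) * (if m = b then 1 else 0))"
        by (simp add: sum_subtractf[symmetric] algebra_simps)
      also have "(\<Sum>m<r. Y n $$ (a,m) * (if m = b then 1 else 0)) = Y n $$ (a,b)"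
      proof -
        have "(\<Sum>m<r. Y n $$ (a,m) * (if m = b then 1 else 0)) = (\<Sum>m<r. if m = b then Y n $$ (a,b) else 0)"
          by (intro sum.cong) auto
        then show ?thesis using b by simp
      qed
      finally show ?case unfolding s by simp
    qed
    have "(\<lambda>n. (if a = b then 1 else 0) - (\<Sum>m<r. Y n $$ (a,m) * (G n $$ (m,b) - (if m = b then 1 else 0)))) \<longlonglongrightarrow> (if a = b then 1 else 0) - (\<Sum>m<r. 0)"
    proof (intro tendsto_diff tendsto_const tendsto_sum)
      fix m assume m: "m \<in> {..<r}"
      have "(\<lambda>n. G n $$ (m,b) - (if m = b then 1 else 0)) \<longlonglongrightarrow> 0"
        using G_lim m b tendsto_diff[OF _ tendsto_const, of "\<lambda>n. G n $$ (m,b)" "if m = b then 1 else 0" sequentially "if m = b then 1 else 0"]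
        by auto
      then show "(\<lambda>n. Y n $$ (a,m) * (G n $$ (m,b) - (if m = b then 1 else 0))) \<longlonglongrightarrow> 0"
        using Ybnd[of m] m by (intro bounded_mult_zero) auto
    qed
    then have "(\<lambda>n. (if a = b then 1 else 0) - (\<Sum>m<r. Y n $$ (a,m) * (G n $$ (m,b) - (if m = b then 1 else 0)))) \<longlonglongrightarrow> (if a = b then 1 else 0)"
      by simp
    then show "(\<lambda>n. (W n * mat_adjoint (W n)) $$ (a,b)) \<longlonglongrightarrow> (if a = b then 1 else 0)"
    proof (rule Lim_transform_eventually)
      show "\<forall>\<^sub>F n in sequentially. (if a = b then 1 else 0) - (\<Sum>m<r. Y n $$ (a,m) * (G n $$ (m,b) - (if m = b then 1 else 0))) = (W n * mat_adjoint (W n)) $$ (a,b)"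
        using eqn unfolding Y_def by eventually_elim simp
    qed
  qed
qed

lemma bs_Suc: "blk_start j (Suc i) = blk_start j i + j i"
  by (simp add: blk_start_def)

lemma bs_mono: "i \<le> i' \<Longrightarrow> blk_start j i \<le> blk_start j i'"
  unfolding blk_start_def by (intro sum_mono2) auto

lemma blk_exists: "k < blk_start j s \<Longrightarrow> \<exists>i<s. blk_start j i \<le> k \<and> k < blk_start j (Suc i)"
proof (induction s)
  case 0 then show ?case by (simp add: blk_start_def)
next
  case (Suc s)
  show ?case
  proof (cases "k < blk_start j s")
    case True then show ?thesis using Suc.IH by (meson less_SucI)
  next
    case False then show ?thesis using Suc.prems by (intro exI[of _ s]) auto
  qed
qed

lemma blk_unique: assumes "blk_start j i \<le> k" "k < blk_start j (Suc i)" "blk_start j i' \<le> k" "k < blk_start j (Suc i')"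
  shows "i = i'"
proof (rule ccontr)
  assume "i \<noteq> i'"
  then consider "Suc i \<le> i'" | "Suc i' \<le> i" by linarith
  then show False
  proof cases
    case 1 then show False using bs_mono[OF 1, of j] assms by linarith
  next
    case 2 then show False using bs_mono[OF 2, of j] assms by linarith
  qed
qed

definition blkof :: "nat \<Rightarrow> (nat \<Rightarrow> nat) \<Rightarrow> nat \<Rightarrow> nat" where
  "blkof s j k = (THE i. i < s \<and> blk_start j i \<le> k \<and> k < blk_start j (Suc i))"

lemma Odiag_blkof: "Odiag s j \<omega> k = \<omega> (blkof s j k)"
  by (simp add: Odiag_def blkof_def)

lemma blkof_props: assumes "k < blk_start j s"
  shows "blkof s j k < s \<and> blk_start j (blkof s j k) \<le> k \<and> k < blk_start j (Suc (blkof s j k))"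
proof -
  obtain i where i: "i < s" "blk_start j i \<le> k" "k < blk_start j (Suc i)" using blk_exists[OF assms] by blast
  show ?thesis unfolding blkof_def
    by (rule theI[of _ i]) (use i blk_unique in blast)+
qed

lemma blkof_eq: assumes "i < s" "blk_start j i \<le> k" "k < blk_start j (Suc i)"
  shows "blkof s j k = i"
  unfolding blkof_def by (rule the_equality) (use assms blk_unique in blast)+

lemma in_blk_iff: assumes i: "i < s"
  shows "k \<in> {blk_start j i..<blk_start j (Suc i)} \<longleftrightarrow> k < blk_start j s \<and> blkof s j k = i"
proof
  assume k: "k \<in> {blk_start j i..<blk_start j (Suc i)}"
  have "blk_start j (Suc i) \<le> blk_start j s" using i by (intro bs_mono) simp
  then show "k < blk_start j s \<and> blkof s j k = i" using k blkof_eq[OF i] by auto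
next
  assume "k < blk_start j s \<and> blkof s j k = i"
  then show "k \<in> {blk_start j i..<blk_start j (Suc i)}" using blkof_props[of k j s] by auto
qed

lemma vnorm_unit: "0 < n \<Longrightarrow> vnorm (unit_vec n 0 :: complex vec) = 1"
proof -
  assume n: "0 < n"
  have "(\<Sum>i<n. (cmod (unit_vec n 0 $ i :: complex))^2) = (\<Sum>i<n. if i = 0 then 1 else 0)"
    by (intro sum.cong) auto
  also have "\<dots> = 1" using n by simp
  finally show ?thesis unfolding vnorm_def by simp
qed

lemma spec_norm_bound: fixes A :: "complex mat"
  assumes "0 < dim_col A" "0 \<le> t" "\<forall>x\<in>carrier_vec (dim_col A). vnorm (A *\<^sub>v x) \<le> t * vnorm x"
  shows "0 \<le> spec_norm A \<and> spec_norm A \<le> t"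
proof -
  define S where "S = {vnorm (A *\<^sub>v x) | x. x \<in> carrier_vec (dim_col A) \<and> vnorm x = 1}"
  have mem: "vnorm (A *\<^sub>v unit_vec (dim_col A) 0) \<in> S" unfolding S_def using vnorm_unit[OF assms(1)] by auto
  have ub: "\<forall>y\<in>S. y \<le> t" unfolding S_def using assms(3) by auto
  have ne: "S \<noteq> {}" using mem by auto
  have bdd: "bdd_above S" using ub by (auto intro: bdd_aboveI)
  have "spec_norm A = Sup S" by (simp add: spec_norm_def S_def)
  moreover have "Sup S \<le> t" using cSup_least[OF ne] ub by blast
  moreover have "0 \<le> Sup S" using cSup_upper[OF mem bdd] vnorm_nonneg[of "A *\<^sub>v unit_vec (dim_col A) 0"] by linarith
  ultimately show ?thesis by simp
qed

lemma vnorm_neg_eq: "dim_vec u = dim_vec v \<Longrightarrow> (\<And>i. i < dim_vec v \<Longrightarrow> u $ i = - v $ i) \<Longrightarrow> vnorm u = vnorm v"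
  unfolding vnorm_def by (intro arg_cong[where f=sqrt] sum.cong) auto

lemma sandwich_entry: fixes B X :: "complex mat"
  assumes B: "B \<in> carrier_mat N r" and X: "X \<in> carrier_mat r r" and ab: "a < N" "b < N"
  shows "(B * X * mat_adjoint B) $$ (a,b) = (\<Sum>p<r. \<Sum>q<r. B $$ (a,p) * X $$ (p,q) * cnj (B $$ (b,q)))"
proof -
  have BX: "B * X \<in> carrier_mat N r" using B X by simp
  have "(B * X * mat_adjoint B) $$ (a,b) = (\<Sum>q<r. (B * X) $$ (a,q) * mat_adjoint B $$ (q,b))"
    using BX B ab by (subst mult_entry) auto
  also have "\<dots> = (\<Sum>q<r. (\<Sum>p<r. B $$ (a,p) * X $$ (p,q)) * cnj (B $$ (b,q)))"
    using B X ab by (intro sum.cong refl) (subst mult_entry, auto)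
  also have "\<dots> = (\<Sum>q<r. \<Sum>p<r. B $$ (a,p) * X $$ (p,q) * cnj (B $$ (b,q)))"
    by (simp add: sum_distrib_right)
  also have "\<dots> = (\<Sum>p<r. \<Sum>q<r. B $$ (a,p) * X $$ (p,q) * cnj (B $$ (b,q)))" by (rule sum.swap)
  finally show ?thesis .
qed

definition Mblk :: "complex mat \<Rightarrow> nat \<Rightarrow> (nat \<Rightarrow> nat) \<Rightarrow> nat \<Rightarrow> complex mat" where
  "Mblk W r j i = mat r r (\<lambda>(p,q). \<Sum>k\<in>{blk_start j i..<blk_start j (Suc i)}. W $$ (p,k) * cnj (W $$ (q,k)))"

definition Eblk :: "nat \<Rightarrow> (nat \<Rightarrow> nat) \<Rightarrow> nat \<Rightarrow> complex mat" where
  "Eblk r j i = mat r r (\<lambda>(p,q). if p = q \<and> p \<in> {blk_start j i..<blk_start j (Suc i)} then 1 else 0)"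

lemma Pi_decomp: fixes B W :: "complex mat"
  assumes B: "B \<in> carrier_mat N r" and W: "W \<in> carrier_mat r r" and le: "blk_start j (Suc i) \<le> r"
  shows "Pi_blk (B * W) j i - col_block B j i * mat_adjoint (col_block B j i) = B * (Mblk W r j i - Eblk r j i) * mat_adjoint B"
proof (rule eq_matI)
  let ?K = "{blk_start j i..<blk_start j (Suc i)}"
  have Kr: "\<And>k. k \<in> ?K \<Longrightarrow> k < r" using le by auto
  have Xc: "Mblk W r j i - Eblk r j i \<in> carrier_mat r r" by (intro carrier_matI) (simp_all add: Mblk_def Eblk_def)
  have Bi: "col_block B j i \<in> carrier_mat N (j i)" using B by (simp add: col_block_def)
  fix a b assume "a < dim_row (B * (Mblk W r j i - Eblk r j i) * mat_adjoint B)" "b < dim_col (B * (Mblk W r j i - Eblk r j i) * mat_adjoint B)"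
  then have a: "a < N" and b: "b < N" using B by auto
  have BWe: "(B * W) $$ (x,k) = (\<Sum>p<r. B $$ (x,p) * W $$ (p,k))" if "x < N" "k < r" for x k
    using B W that by (subst mult_entry) auto
  have "Pi_blk (B * W) j i $$ (a,b) = (\<Sum>k\<in>?K. (B * W) $$ (a,k) * cnj ((B * W) $$ (b,k)))"
    using B W a b by (simp add: Pi_blk_def)
  also have "\<dots> = (\<Sum>k\<in>?K. (\<Sum>p<r. B $$ (a,p) * W $$ (p,k)) * cnj (\<Sum>q<r. B $$ (b,q) * W $$ (q,k)))"
    using a b Kr by (intro sum.cong refl) (simp add: BWe)
  also have "\<dots> = (\<Sum>k\<in>?K. \<Sum>q<r. \<Sum>p<r. B $$ (a,p) * (W $$ (p,k) * cnj (W $$ (q,k))) * cnj (B $$ (b,q)))"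
    by (simp add: sum_distrib_left sum_distrib_right cnj_sum algebra_simps)
  also have "\<dots> = (\<Sum>k\<in>?K. \<Sum>p<r. \<Sum>q<r. B $$ (a,p) * (W $$ (p,k) * cnj (W $$ (q,k))) * cnj (B $$ (b,q)))"
    by (intro sum.cong refl sum.swap)
  also have "\<dots> = (\<Sum>p<r. \<Sum>k\<in>?K. \<Sum>q<r. B $$ (a,p) * (W $$ (p,k) * cnj (W $$ (q,k))) * cnj (B $$ (b,q)))"
    by (rule sum.swap)
  also have "\<dots> = (\<Sum>p<r. \<Sum>q<r. \<Sum>k\<in>?K. B $$ (a,p) * (W $$ (p,k) * cnj (W $$ (q,k))) * cnj (B $$ (b,q)))"
    by (intro sum.cong refl sum.swap)
  also have "\<dots> = (\<Sum>p<r. \<Sum>q<r. B $$ (a,p) * Mblk W r j i $$ (p,q) * cnj (B $$ (b,q)))"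
    by (intro sum.cong refl) (simp add: Mblk_def sum_distrib_left sum_distrib_right)
  finally have e1: "Pi_blk (B * W) j i $$ (a,b) = (\<Sum>p<r. \<Sum>q<r. B $$ (a,p) * Mblk W r j i $$ (p,q) * cnj (B $$ (b,q)))" .
  have "(col_block B j i * mat_adjoint (col_block B j i)) $$ (a,b) = (\<Sum>l<j i. B $$ (a, blk_start j i + l) * cnj (B $$ (b, blk_start j i + l)))"
    using Bi a b B by (subst mult_entry) (auto simp: col_block_def)
  also have "\<dots> = (\<Sum>k\<in>?K. B $$ (a,k) * cnj (B $$ (b,k)))"
  proof -
    have "?K = (\<lambda>l. blk_start j i + l) ` {..<j i}"
    proof
      show "?K \<subseteq> (\<lambda>l. blk_start j i + l) ` {..<j i}"
      proof
        fix x assume "x \<in> ?K"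
        then have "x = blk_start j i + (x - blk_start j i)" "x - blk_start j i \<in> {..<j i}" by (auto simp: bs_Suc)
        then show "x \<in> (\<lambda>l. blk_start j i + l) ` {..<j i}" by blast
      qed
    qed (auto simp: bs_Suc)
    then show ?thesis by (simp add: sum.reindex)
  qed
  also have "\<dots> = (\<Sum>p<r. \<Sum>q<r. B $$ (a,p) * Eblk r j i $$ (p,q) * cnj (B $$ (b,q)))"
  proof -
    have "(\<Sum>p<r. \<Sum>q<r. B $$ (a,p) * Eblk r j i $$ (p,q) * cnj (B $$ (b,q))) = (\<Sum>p<r. if p \<in> ?K then B $$ (a,p) * cnj (B $$ (b,p)) else 0)"
    proof (intro sum.cong refl)
      fix p assume p: "p \<in> {..<r}"
      have "(\<Sum>q<r. B $$ (a,p) * Eblk r j i $$ (p,q) * cnj (B $$ (b,q))) = (\<Sum>q<r. if q = p then (if p \<in> ?K then B $$ (a,p) * cnj (B $$ (b,p)) else 0) else 0)"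
        using p by (intro sum.cong refl) (auto simp: Eblk_def)
      also have "\<dots> = (if p \<in> ?K then B $$ (a,p) * cnj (B $$ (b,p)) else 0)" using p by simp
      finally show "(\<Sum>q<r. B $$ (a,p) * Eblk r j i $$ (p,q) * cnj (B $$ (b,q))) = (if p \<in> ?K then B $$ (a,p) * cnj (B $$ (b,p)) else 0)" .
    qed
    also have "\<dots> = (\<Sum>p\<in>{..<r} \<inter> ?K. B $$ (a,p) * cnj (B $$ (b,p)))" by (simp add: sum.inter_restrict)
    also have "{..<r} \<inter> ?K = ?K" using Kr by auto
    finally show ?thesis by simp
  qed
  finally have e2: "(col_block B j i * mat_adjoint (col_block B j i)) $$ (a,b) = (\<Sum>p<r. \<Sum>q<r. B $$ (a,p) * Eblk r j i $$ (p,q) * cnj (B $$ (b,q)))" .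
  have "(B * (Mblk W r j i - Eblk r j i) * mat_adjoint B) $$ (a,b) = (\<Sum>p<r. \<Sum>q<r. B $$ (a,p) * (Mblk W r j i - Eblk r j i) $$ (p,q) * cnj (B $$ (b,q)))"
    by (rule sandwich_entry[OF B Xc a b])
  also have "\<dots> = (\<Sum>p<r. \<Sum>q<r. B $$ (a,p) * Mblk W r j i $$ (p,q) * cnj (B $$ (b,q))) - (\<Sum>p<r. \<Sum>q<r. B $$ (a,p) * Eblk r j i $$ (p,q) * cnj (B $$ (b,q)))"
    by (simp add: sum_subtractf[symmetric] algebra_simps Mblk_def Eblk_def)
  also have "\<dots> = (Pi_blk (B * W) j i - col_block B j i * mat_adjoint (col_block B j i)) $$ (a,b)"
    unfolding e1[symmetric] e2[symmetric] using a b Bi B by (simp add: Pi_blk_def)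
  finally show "(Pi_blk (B * W) j i - col_block B j i * mat_adjoint (col_block B j i)) $$ (a,b) = (B * (Mblk W r j i - Eblk r j i) * mat_adjoint B) $$ (a,b)" by simp
qed (use B in \<open>auto simp: Pi_blk_def col_block_def\<close>)

lemma bent_norm: "cmod (bent N D l t) = 1 / sqrt (real N)"
  unfolding bent_def by (simp add: norm_divide)

lemma bnd_Bmat: "bnd (Bmat N D r phi)"
  unfolding bnd_def by (simp add: bent_norm)

lemma bnd_col_block: assumes "bnd B" "blk_start j i + j i \<le> dim_col B"
  shows "bnd (col_block B j i)"
  using assms unfolding bnd_def col_block_def by auto

lemma inv_sqrt_lim: "(\<lambda>n. K / sqrt (real n)) \<longlonglongrightarrow> 0"
  by (rule tendsto_divide_0[OF tendsto_const filterlim_at_top_imp_at_infinity[OF filterlim_compose[OF sqrt_at_top filterlim_real_sequentially]]])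

lemma colblock_gram_entry: fixes B :: "complex mat"
  assumes B: "B \<in> carrier_mat N r" and le: "blk_start j i + j i \<le> r" and pq: "p < j i" "q < j i"
  shows "(mat_adjoint (col_block B j i) * col_block B j i) $$ (p,q) = (mat_adjoint B * B) $$ (blk_start j i + p, blk_start j i + q)"
proof -
  have "(mat_adjoint (col_block B j i) * col_block B j i) $$ (p,q) = (\<Sum>l<N. cnj (B $$ (l, blk_start j i + p)) * B $$ (l, blk_start j i + q))"
    using B pq by (subst adj_mult_entry) (auto simp: col_block_def)
  also have "\<dots> = (mat_adjoint B * B) $$ (blk_start j i + p, blk_start j i + q)"
    using B pq le by (subst adj_mult_entry) auto
  finally show ?thesis .
qed

lemma part5:
  fixes N :: "nat \<Rightarrow> nat" and c D :: real and r s :: nat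
    and phi :: "nat \<Rightarrow> real" and S :: "nat \<Rightarrow> complex mat"
    and j :: "nat \<Rightarrow> nat" and \<omega> :: "nat \<Rightarrow> real"
    and U V :: "nat \<Rightarrow> complex mat" and \<sigma> :: "nat \<Rightarrow> nat \<Rightarrow> real"
  assumes N_le: "\<And>n. N n \<le> n"
    and N_lim: "(\<lambda>n. real (N n) / real n) \<longlonglongrightarrow> c"
    and c_pos: "0 < c"
    and D_pos: "0 < D"
    and phi_range: "\<And>k. k < r \<Longrightarrow> 0 \<le> phi k \<and> phi k \<le> pi / D"
    and phi_distinct: "inj_on phi {..<r}"
    and S_carrier: "\<And>n. S n \<in> carrier_mat n r"
    and S_bound: "\<exists>K. \<forall>\<^sub>F n in sequentially. \<forall>a<r. \<forall>b<r.
        cmod (complex_of_real (sqrt (real n)) *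
              (mat_adjoint (S n) * S n - Omat r s j \<omega> * Omat r s j \<omega>) $$ (a, b)) \<le> K"
    and \<omega>_pos: "\<And>i. i < s \<Longrightarrow> 0 < \<omega> i"
    and \<omega>_decr: "\<And>i i'. i < i' \<Longrightarrow> i' < s \<Longrightarrow> \<omega> i' < \<omega> i"
    and j_sum: "(\<Sum>i<s. j i) = r"
    and svd: "\<forall>\<^sub>F n in sequentially.
        U n \<in> carrier_mat (N n) r \<and> V n \<in> carrier_mat n r \<and>
        mat_adjoint (U n) * U n = 1\<^sub>m r \<and> mat_adjoint (V n) * V n = 1\<^sub>m r \<and>
        (\<forall>k k'. k \<le> k' \<longrightarrow> k' < r \<longrightarrow> \<sigma> n k' \<le> \<sigma> n k) \<and>
        (\<forall>k<r. 0 < \<sigma> n k) \<and>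
        Bmat (N n) D r phi * mat_adjoint (S n) =
          U n * mat_diag r (\<lambda>k. complex_of_real (\<sigma> n k)) * mat_adjoint (V n)"
    and \<sigma>_lim: "\<And>k. k < r \<Longrightarrow> (\<lambda>n. \<sigma> n k) \<longlonglongrightarrow> Odiag s j \<omega> k"
  shows "\<forall>i<s. (\<lambda>n. spec_norm (Pi_blk (U n) j i - proj_colspace (col_block (Bmat (N n) D r phi) j i)))
        \<longlonglongrightarrow> 0"
proof -
  note P14 = parts1to4[OF N_le N_lim c_pos D_pos phi_range phi_distinct]
  have G_lim: "\<forall>a<r. \<forall>b<r. (\<lambda>n. (mat_adjoint (Bmat (N n) D r phi) * Bmat (N n) D r phi) $$ (a,b)) \<longlonglongrightarrow> (if a = b then 1 else 0)"
    using P14 by blast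
  define Od where "Od = Odiag s j \<omega>"
  define blk where "blk = blkof s j"
  have bs_r: "blk_start j s = r" using j_sum by (simp add: blk_start_def)
  define W where "W n = mat_adjoint (S n) * V n * mat_diag r (\<lambda>k. complex_of_real (1 / \<sigma> n k))" for n
  have Bc: "Bmat (N n) D r phi \<in> carrier_mat (N n) r" for n by (intro carrier_matI) simp_all
  have svd2: "\<forall>\<^sub>F n in sequentially. U n \<in> carrier_mat (N n) r \<and> U n = Bmat (N n) D r phi * W n \<and> W n \<in> carrier_mat r r \<and>
      mat_adjoint (W n) * (mat_adjoint (Bmat (N n) D r phi) * Bmat (N n) D r phi) * W n = 1\<^sub>m r \<and>
      mat_adjoint (S n) * S n * (mat_adjoint (Bmat (N n) D r phi) * Bmat (N n) D r phi) * W n = W n * mat_diag r (\<lambda>k. complex_of_real ((\<sigma> n k)^2))"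
    using svd
  proof eventually_elim
    case (elim n)
    then have Uc: "U n \<in> carrier_mat (N n) r" and Vc: "V n \<in> carrier_mat n r" and UU: "mat_adjoint (U n) * U n = 1\<^sub>m r"
      and VV: "mat_adjoint (V n) * V n = 1\<^sub>m r" and pos: "\<forall>k<r. 0 < \<sigma> n k"
      and eq: "Bmat (N n) D r phi * mat_adjoint (S n) = U n * mat_diag r (\<lambda>k. complex_of_real (\<sigma> n k)) * mat_adjoint (V n)"
      by auto
    note sa = svd_algebra[OF Bc S_carrier[of n] Uc Vc UU VV pos eq]
    show ?case using Uc sa unfolding W_def by simp
  qed
  obtain K where K: "\<forall>\<^sub>F n in sequentially. \<forall>a<r. \<forall>b<r.
        cmod (complex_of_real (sqrt (real n)) * (mat_adjoint (S n) * S n - Omat r s j \<omega> * Omat r s j \<omega>) $$ (a, b)) \<le> K"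
    using S_bound by blast
  have OOc: "Omat r s j \<omega> * Omat r s j \<omega> \<in> carrier_mat r r" by (simp add: Omat_def)
  have OO: "(Omat r s j \<omega> * Omat r s j \<omega>) $$ (a,b) = (if a = b then complex_of_real ((Od a)^2) else 0)" if "a < r" "b < r" for a b
    using that unfolding Omat_def diag_mult Od_def by (simp add: mat_diag_def power2_eq_square)
  have Hc: "mat_adjoint (S n) * S n \<in> carrier_mat r r" for n by (rule mult_carrier_mat[OF adj_carrier[OF S_carrier[of n]] S_carrier[of n]])
  have H_lim: "\<forall>a<r. \<forall>b<r. (\<lambda>n. (mat_adjoint (S n) * S n) $$ (a,b)) \<longlonglongrightarrow> (if a = b then complex_of_real ((Od a)^2) else 0)"
  proof (intro allI impI)
    fix a b assume a: "a < r" and b: "b < r"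
    let ?D = "\<lambda>n. (mat_adjoint (S n) * S n) $$ (a,b) - (Omat r s j \<omega> * Omat r s j \<omega>) $$ (a,b)"
    have D0: "?D \<longlonglongrightarrow> 0"
    proof (rule Lim_null_comparison)
      show "(\<lambda>n. K / sqrt (real n)) \<longlonglongrightarrow> 0" by (rule inv_sqrt_lim)
      show "\<forall>\<^sub>F n in sequentially. norm (?D n) \<le> K / sqrt (real n)"
        using K eventually_gt_at_top[of 0]
      proof eventually_elim
        case (elim n)
        have eqD: "(mat_adjoint (S n) * S n - Omat r s j \<omega> * Omat r s j \<omega>) $$ (a,b) = ?D n"
          by (rule index_minus_mat(1)) (use OOc a b in auto)
        have "cmod (complex_of_real (sqrt (real n)) * (mat_adjoint (S n) * S n - Omat r s j \<omega> * Omat r s j \<omega>) $$ (a, b)) \<le> K"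
          using elim a b by blast
        then have "sqrt (real n) * cmod (?D n) \<le> K" unfolding eqD by (simp add: norm_mult)
        moreover have "0 < sqrt (real n)" using elim by simp
        ultimately show ?case by (simp add: field_simps)
      qed
    qed
    have "(\<lambda>n. ?D n + (Omat r s j \<omega> * Omat r s j \<omega>) $$ (a,b)) \<longlonglongrightarrow> 0 + (Omat r s j \<omega> * Omat r s j \<omega>) $$ (a,b)"
      by (intro tendsto_add D0 tendsto_const)
    then show "(\<lambda>n. (mat_adjoint (S n) * S n) $$ (a,b)) \<longlonglongrightarrow> (if a = b then complex_of_real ((Od a)^2) else 0)"
      using OO[OF a b] by simp
  qed
  have blk_lt: "blk k < s" if "k < r" for k using blkof_props[of k j s] that bs_r by (simp add: blk_def)
  have Od_blk: "Od k = \<omega> (blk k)" for k by (simp add: Od_def blk_def Odiag_blkof)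
  have sep: "\<forall>a<r. \<forall>k<r. blk a \<noteq> blk k \<longrightarrow> (Od a)^2 \<noteq> (Od k)^2"
  proof (intro allI impI)
    fix a k assume a: "a < r" and k: "k < r" and bk: "blk a \<noteq> blk k"
    have ne: "\<omega> (blk a) \<noteq> \<omega> (blk k)"
      using bk blk_lt[OF a] blk_lt[OF k] \<omega>_decr by (metis less_irrefl nat_neq_iff)
    have "0 < \<omega> (blk a)" "0 < \<omega> (blk k)" using \<omega>_pos blk_lt a k by auto
    then show "(Od a)^2 \<noteq> (Od k)^2" using ne power2_eq_iff[of "\<omega> (blk a)" "\<omega> (blk k)"] unfolding Od_blk by auto
  qed
  have ev: "eventually (\<lambda>n. mat_adjoint (Bmat (N n) D r phi) * Bmat (N n) D r phi \<in> carrier_mat r r \<and>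
      mat_adjoint (S n) * S n \<in> carrier_mat r r \<and> W n \<in> carrier_mat r r \<and>
      mat_adjoint (W n) * (mat_adjoint (Bmat (N n) D r phi) * Bmat (N n) D r phi) * W n = 1\<^sub>m r \<and>
      mat_adjoint (S n) * S n * (mat_adjoint (Bmat (N n) D r phi) * Bmat (N n) D r phi) * W n = W n * mat_diag r (\<lambda>k. complex_of_real ((\<sigma> n k)^2))) sequentially"
    using svd2 by eventually_elim (use Bc Hc in auto)
  have sig_lim: "\<forall>k<r. (\<lambda>n. \<sigma> n k) \<longlonglongrightarrow> Od k" using \<sigma>_lim by (simp add: Od_def)
  note WA = W_analysis[OF ev G_lim H_lim sig_lim sep]
  have Wbnd: "eventually (\<lambda>n. cmod (W n $$ (a,k)) \<le> 2) sequentially" if "a < r" "k < r" for a k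
    using WA(1) by eventually_elim (use that in auto)
  have Wbndc: "eventually (\<lambda>n. cmod (cnj (W n $$ (a,k))) \<le> 2) sequentially" if "a < r" "k < r" for a k
    using Wbnd[OF that] by simp
  have Woff: "(\<lambda>n. W n $$ (a,k)) \<longlonglongrightarrow> 0" if "a < r" "k < r" "blk a \<noteq> blk k" for a k
    using WA(2) that by blast
  have WW: "(\<lambda>n. (W n * mat_adjoint (W n)) $$ (a,b)) \<longlonglongrightarrow> (if a = b then 1 else 0)" if "a < r" "b < r" for a b
    using WA(3) that by blast
  show ?thesis
  proof (intro allI impI)
    fix i assume i: "i < s"
    let ?K = "{blk_start j i..<blk_start j (Suc i)}"
    have le: "blk_start j (Suc i) \<le> r" using bs_mono[of "Suc i" s j] i bs_r by simp
    have le': "blk_start j i + j i \<le> r" using le by (simp add: bs_Suc)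
    have inK: "k \<in> ?K \<longleftrightarrow> k < r \<and> blk k = i" for k using in_blk_iff[OF i, of k j] bs_r by (simp add: blk_def)
    have Ksub: "?K \<subseteq> {..<r}" using le by auto
    have Xlim: "(\<lambda>n. (Mblk (W n) r j i - Eblk r j i) $$ (p,q)) \<longlonglongrightarrow> 0" if p: "p < r" and q: "q < r" for p q
    proof -
      have entry: "(Mblk (W n) r j i - Eblk r j i) $$ (p,q) = (\<Sum>k\<in>?K. W n $$ (p,k) * cnj (W n $$ (q,k))) - (if p = q \<and> p \<in> ?K then 1 else 0)" for n
        using p q by (simp add: Mblk_def Eblk_def)
      have lim: "(\<lambda>n. \<Sum>k\<in>?K. W n $$ (p,k) * cnj (W n $$ (q,k))) \<longlonglongrightarrow> (if p = q \<and> p \<in> ?K then 1 else 0)"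
      proof (cases "blk p = i")
        case False
        have "(\<lambda>n. \<Sum>k\<in>?K. W n $$ (p,k) * cnj (W n $$ (q,k))) \<longlonglongrightarrow> (\<Sum>k\<in>?K. 0)"
        proof (intro tendsto_sum)
          fix k assume k: "k \<in> ?K"
          then have kr: "k < r" and bk: "blk k = i" using inK by auto
          have "(\<lambda>n. cnj (W n $$ (q,k)) * W n $$ (p,k)) \<longlonglongrightarrow> 0"
            by (rule bounded_mult_zero[OF Wbndc[OF q kr] Woff[OF p kr]]) (use False bk in simp)
          then show "(\<lambda>n. W n $$ (p,k) * cnj (W n $$ (q,k))) \<longlonglongrightarrow> 0" by (simp add: mult.commute)
        qed
        moreover have z: "(if p = q \<and> p \<in> ?K then 1 else (0::complex)) = 0" using False inK by auto
        ultimately show ?thesis unfolding z by simp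
      next
        case Tp: True
        show ?thesis
        proof (cases "blk q = i")
          case False
          have "(\<lambda>n. \<Sum>k\<in>?K. W n $$ (p,k) * cnj (W n $$ (q,k))) \<longlonglongrightarrow> (\<Sum>k\<in>?K. 0)"
          proof (intro tendsto_sum)
            fix k assume k: "k \<in> ?K"
            then have kr: "k < r" and bk: "blk k = i" using inK by auto
            have "(\<lambda>n. cnj (W n $$ (q,k))) \<longlonglongrightarrow> cnj 0" using Woff[OF q kr] False bk by (intro tendsto_cnj) simp
            then show "(\<lambda>n. W n $$ (p,k) * cnj (W n $$ (q,k))) \<longlonglongrightarrow> 0"
              using bounded_mult_zero[OF Wbnd[OF p kr]] by simp
          qed
          moreover have z: "(if p = q \<and> p \<in> ?K then 1 else (0::complex)) = 0" using False Tp inK by auto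
          ultimately show ?thesis unfolding z by simp
        next
          case Tq: True
          have pK: "p \<in> ?K" using Tp p inK by simp
          have rest: "(\<lambda>n. \<Sum>k\<in>{..<r} - ?K. W n $$ (p,k) * cnj (W n $$ (q,k))) \<longlonglongrightarrow> (\<Sum>k\<in>{..<r} - ?K. 0)"
          proof (intro tendsto_sum)
            fix k assume k: "k \<in> {..<r} - ?K"
            then have kr: "k < r" and bk: "blk k \<noteq> i" using inK by auto
            have "(\<lambda>n. cnj (W n $$ (q,k)) * W n $$ (p,k)) \<longlonglongrightarrow> 0"
              by (rule bounded_mult_zero[OF Wbndc[OF q kr] Woff[OF p kr]]) (use Tp bk in simp)
            then show "(\<lambda>n. W n $$ (p,k) * cnj (W n $$ (q,k))) \<longlonglongrightarrow> 0" by (simp add: mult.commute)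
          qed
          have "(\<lambda>n. (W n * mat_adjoint (W n)) $$ (p,q) - (\<Sum>k\<in>{..<r} - ?K. W n $$ (p,k) * cnj (W n $$ (q,k))))
              \<longlonglongrightarrow> (if p = q then 1 else 0) - (\<Sum>k\<in>{..<r} - ?K. 0)"
            by (intro tendsto_diff WW p q rest)
          then have l2: "(\<lambda>n. (W n * mat_adjoint (W n)) $$ (p,q) - (\<Sum>k\<in>{..<r} - ?K. W n $$ (p,k) * cnj (W n $$ (q,k))))
              \<longlonglongrightarrow> (if p = q \<and> p \<in> ?K then 1 else 0)" using pK by simp
          show ?thesis
          proof (rule Lim_transform_eventually[OF l2])
            show "\<forall>\<^sub>F n in sequentially. (W n * mat_adjoint (W n)) $$ (p,q) - (\<Sum>k\<in>{..<r} - ?K. W n $$ (p,k) * cnj (W n $$ (q,k)))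
                = (\<Sum>k\<in>?K. W n $$ (p,k) * cnj (W n $$ (q,k)))"
              using svd2
            proof eventually_elim
              case (elim n)
              then have Wc: "W n \<in> carrier_mat r r" by auto
              have "(W n * mat_adjoint (W n)) $$ (p,q) = (\<Sum>k<r. W n $$ (p,k) * cnj (W n $$ (q,k)))"
                using Wc p q by (subst mult_entry) auto
              also have "\<dots> = (\<Sum>k\<in>?K. W n $$ (p,k) * cnj (W n $$ (q,k))) + (\<Sum>k\<in>{..<r} - ?K. W n $$ (p,k) * cnj (W n $$ (q,k)))"
                using sum.subset_diff[OF Ksub, of "\<lambda>k. W n $$ (p,k) * cnj (W n $$ (q,k))"] by simp
              finally show ?case by simp
            qed
          qed
        qed
      qed
      have "(\<lambda>n. (\<Sum>k\<in>?K. W n $$ (p,k) * cnj (W n $$ (q,k))) - (if p = q \<and> p \<in> ?K then 1 else 0))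
          \<longlonglongrightarrow> (if p = q \<and> p \<in> ?K then 1 else 0) - (if p = q \<and> p \<in> ?K then 1 else 0)"
        by (intro tendsto_diff lim tendsto_const)
      then show ?thesis unfolding entry by simp
    qed
    define xi where "xi n = (\<Sum>p<r. \<Sum>q<r. cmod ((Mblk (W n) r j i - Eblk r j i) $$ (p,q)))" for n
    have xi0: "xi \<longlonglongrightarrow> 0"
    proof -
      have "xi \<longlonglongrightarrow> (\<Sum>p<r. \<Sum>q<r. 0)" unfolding xi_def
        by (intro tendsto_sum tendsto_norm_zero Xlim) auto
      then show ?thesis by simp
    qed
    define Bi where "Bi n = col_block (Bmat (N n) D r phi) j i" for n
    define dv where "dv n = dev (mat_adjoint (Bi n) * Bi n) (j i)" for n
    have dv0: "dv \<longlonglongrightarrow> 0" unfolding dv_def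
    proof (rule dev_lim, intro allI impI)
      fix a b assume a: "a < j i" and b: "b < j i"
      have "(\<lambda>n. (mat_adjoint (Bmat (N n) D r phi) * Bmat (N n) D r phi) $$ (blk_start j i + a, blk_start j i + b))
          \<longlonglongrightarrow> (if blk_start j i + a = blk_start j i + b then 1 else 0)"
        by (rule G_lim[rule_format]) (use a b le' in auto)
      then show "(\<lambda>n. (mat_adjoint (Bi n) * Bi n) $$ (a,b)) \<longlonglongrightarrow> (if a = b then 1 else 0)"
        unfolding Bi_def using colblock_gram_entry[OF Bc le' a b] by simp
    qed
    have dvh: "eventually (\<lambda>n. dv n \<le> 1/2) sequentially"
      using order_tendstoD(2)[OF dv0, of "1/2"] by (auto elim: eventually_mono)
    have Npos: "eventually (\<lambda>n. 0 < N n) sequentially"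
    proof -
      have "filterlim (\<lambda>n. real (N n)) at_top sequentially" by (rule N_at_top[OF N_lim c_pos])
      then have "eventually (\<lambda>n. real (N n) > 0) sequentially" unfolding filterlim_at_top_dense by blast
      then show ?thesis by eventually_elim simp
    qed
    have bound: "eventually (\<lambda>n. norm (spec_norm (Pi_blk (U n) j i - proj_colspace (Bi n))) \<le> xi n + 2 * dv n) sequentially"
      using svd2 dvh Npos
    proof eventually_elim
      case (elim n)
      let ?B = "Bmat (N n) D r phi"
      let ?N = "N n"
      have Uc: "U n \<in> carrier_mat ?N r" and UBW: "U n = ?B * W n" and Wc: "W n \<in> carrier_mat r r" using elim by auto
      have Bic: "Bi n \<in> carrier_mat ?N (j i)" unfolding Bi_def col_block_def by (intro carrier_matI) auto
      have bB: "bnd ?B" by (rule bnd_Bmat)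
      have bBi: "bnd (Bi n)" unfolding Bi_def by (rule bnd_col_block[OF bB]) (use le' in simp)
      note PB = proj_bound[OF Bic bBi elim(2)[unfolded dv_def]]
      define P where "P = proj_colspace (Bi n)"
      define Pi where "Pi = Pi_blk (U n) j i"
      define Q where "Q = Bi n * mat_adjoint (Bi n)"
      define X where "X = Mblk (W n) r j i - Eblk r j i"
      have Pc: "P \<in> carrier_mat ?N ?N" using PB unfolding is_orth_proj_def P_def by blast
      have Pic: "Pi \<in> carrier_mat ?N ?N" using Uc unfolding Pi_def Pi_blk_def by (intro carrier_matI) auto
      have Qc: "Q \<in> carrier_mat ?N ?N" using Bic unfolding Q_def by (intro mult_carrier_mat[of _ ?N "j i"]) auto
      have Xc: "X \<in> carrier_mat r r" unfolding X_def by (intro carrier_matI) (simp_all add: Mblk_def Eblk_def)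
      have dec: "Pi - Q = ?B * X * mat_adjoint ?B"
        unfolding Pi_def Q_def X_def Bi_def UBW by (rule Pi_decomp[OF Bc Wc le])
      have xn: "0 \<le> xi n" unfolding xi_def by (simp add: sum_nonneg)
      have dn: "0 \<le> dv n" unfolding dv_def by (rule dev_nonneg)
      have vb: "vnorm ((Pi - P) *\<^sub>v x) \<le> (xi n + 2 * dv n) * vnorm x" if x: "x \<in> carrier_vec ?N" for x
      proof -
        define u where "u = (Pi - Q) *\<^sub>v x"
        define v where "v = Q *\<^sub>v x - P *\<^sub>v x"
        have e1: "(Pi - P) *\<^sub>v x = Pi *\<^sub>v x - P *\<^sub>v x" by (rule minus_mult_distrib_mat_vec[OF Pic Pc x])
        have e2: "u = Pi *\<^sub>v x - Q *\<^sub>v x" unfolding u_def by (rule minus_mult_distrib_mat_vec[OF Pic Qc x])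
        have e3: "(P - Q) *\<^sub>v x = P *\<^sub>v x - Q *\<^sub>v x" by (rule minus_mult_distrib_mat_vec[OF Pc Qc x])
        have uv: "(Pi - P) *\<^sub>v x = u + v"
          unfolding e1 e2 v_def using Pic Pc Qc x by (intro eq_vecI) auto
        have "vnorm ((Pi - P) *\<^sub>v x) \<le> vnorm u + vnorm v"
          unfolding uv using Pic Pc Qc x by (intro vnorm_add_le) (simp add: e2 v_def)
        also have "vnorm u \<le> xi n * vnorm x"
          unfolding u_def dec using sandwich_bound[OF bB Bc Xc x] by (simp add: xi_def X_def)
        also have "vnorm v = vnorm ((P - Q) *\<^sub>v x)"
          unfolding e3 v_def using Pc Qc x by (intro vnorm_neg_eq) auto
        also have "\<dots> \<le> 2 * dv n * vnorm x" using PB x unfolding P_def Q_def dv_def by blast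
        finally show ?thesis by (simp add: algebra_simps)
      qed
      have "0 \<le> spec_norm (Pi - P) \<and> spec_norm (Pi - P) \<le> xi n + 2 * dv n"
        by (rule spec_norm_bound) (use Pc elim vb xn dn in auto)
      then show ?case unfolding Pi_def P_def by simp
    qed
    have "(\<lambda>n. xi n + 2 * dv n) \<longlonglongrightarrow> 0 + 2 * 0" by (intro tendsto_intros xi0 dv0)
    then have "(\<lambda>n. xi n + 2 * dv n) \<longlonglongrightarrow> 0" by simp
    from Lim_null_comparison[OF bound this]
    show "(\<lambda>n. spec_norm (Pi_blk (U n) j i - proj_colspace (col_block (Bmat (N n) D r phi) j i))) \<longlonglongrightarrow> 0"
      unfolding Bi_def .
  qed
qed

theorem lemma8:
  fixes N :: "nat \<Rightarrow> nat" and c D :: real and r s :: nat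
    and phi :: "nat \<Rightarrow> real" and S :: "nat \<Rightarrow> complex mat"
    and j :: "nat \<Rightarrow> nat" and \<omega> :: "nat \<Rightarrow> real"
    and U V :: "nat \<Rightarrow> complex mat" and \<sigma> :: "nat \<Rightarrow> nat \<Rightarrow> real"
  assumes N_le: "\<And>n. N n \<le> n"
    and N_lim: "(\<lambda>n. real (N n) / real n) \<longlonglongrightarrow> c"
    and c_pos: "0 < c" and c_le: "c \<le> 1"
    and D_pos: "0 < D"
    and phi_range: "\<And>k. k < r \<Longrightarrow> 0 \<le> phi k \<and> phi k \<le> pi / D"
    and phi_distinct: "inj_on phi {..<r}"
    and S_carrier: "\<And>n. S n \<in> carrier_mat n r"
    and S_bound: "\<exists>K. \<forall>\<^sub>F n in sequentially. \<forall>a<r. \<forall>b<r.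
        cmod (complex_of_real (sqrt (real n)) *
              (mat_adjoint (S n) * S n - Omat r s j \<omega> * Omat r s j \<omega>) $$ (a, b)) \<le> K"
    and \<omega>_pos: "\<And>i. i < s \<Longrightarrow> 0 < \<omega> i"
    and \<omega>_decr: "\<And>i i'. i < i' \<Longrightarrow> i' < s \<Longrightarrow> \<omega> i' < \<omega> i"
    and j_pos: "\<And>i. i < s \<Longrightarrow> 0 < j i"
    and j_sum: "(\<Sum>i<s. j i) = r"
    and svd: "\<forall>\<^sub>F n in sequentially.
        U n \<in> carrier_mat (N n) r \<and> V n \<in> carrier_mat n r \<and>
        mat_adjoint (U n) * U n = 1\<^sub>m r \<and> mat_adjoint (V n) * V n = 1\<^sub>m r \<and>
        (\<forall>k k'. k \<le> k' \<longrightarrow> k' < r \<longrightarrow> \<sigma> n k' \<le> \<sigma> n k) \<and>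
        (\<forall>k<r. 0 < \<sigma> n k) \<and>
        Bmat (N n) D r phi * mat_adjoint (S n) =
          U n * mat_diag r (\<lambda>k. complex_of_real (\<sigma> n k)) * mat_adjoint (V n)"
    and \<sigma>_lim: "\<And>k. k < r \<Longrightarrow> (\<lambda>n. \<sigma> n k) \<longlonglongrightarrow> Odiag s j \<omega> k"
  shows
    "(\<forall>a<r. \<forall>b<r. (\<lambda>n. (mat_adjoint (Bmat (N n) D r phi) * Bmat (N n) D r phi) $$ (a, b))
        \<longlonglongrightarrow> (if a = b then 1 else 0)) \<and>
     (\<forall>a<r. \<forall>b<r. (\<lambda>n. complex_of_real (1 / (real n)\<^sup>2) *
          (mat_adjoint (Bmat (N n) D r phi) * Bmat'' (N n) D r phi) $$ (a, b))
        \<longlonglongrightarrow> (if a = b then complex_of_real (- (c\<^sup>2 * D\<^sup>2 / 3)) else 0)) \<and>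
     (\<forall>a<r. \<forall>b<r. (\<lambda>n. (mat_adjoint (Bperp n (N n) c D r phi) * Bperp n (N n) c D r phi) $$ (a, b))
        \<longlonglongrightarrow> (if a = b then 1 else 0)) \<and>
     (\<forall>a<r. \<forall>b<r. (\<lambda>n. (mat_adjoint (Bperp n (N n) c D r phi) * Bmat (N n) D r phi) $$ (a, b))
        \<longlonglongrightarrow> 0) \<and>
     (\<forall>i<s. (\<lambda>n. spec_norm (Pi_blk (U n) j i - proj_colspace (col_block (Bmat (N n) D r phi) j i)))
        \<longlonglongrightarrow> 0)"
  proof -
  have P14: "(\<forall>a<r. \<forall>b<r. (\<lambda>n. (mat_adjoint (Bmat (N n) D r phi) * Bmat (N n) D r phi) $$ (a, b))
        \<longlonglongrightarrow> (if a = b then 1 else 0)) \<and>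
     (\<forall>a<r. \<forall>b<r. (\<lambda>n. complex_of_real (1 / (real n)\<^sup>2) *
          (mat_adjoint (Bmat (N n) D r phi) * Bmat'' (N n) D r phi) $$ (a, b))
        \<longlonglongrightarrow> (if a = b then complex_of_real (- (c\<^sup>2 * D\<^sup>2 / 3)) else 0)) \<and>
     (\<forall>a<r. \<forall>b<r. (\<lambda>n. (mat_adjoint (Bperp n (N n) c D r phi) * Bperp n (N n) c D r phi) $$ (a, b))
        \<longlonglongrightarrow> (if a = b then 1 else 0)) \<and>
     (\<forall>a<r. \<forall>b<r. (\<lambda>n. (mat_adjoint (Bperp n (N n) c D r phi) * Bmat (N n) D r phi) $$ (a, b))
        \<longlonglongrightarrow> 0)"
    by (rule parts1to4[OF N_le N_lim c_pos D_pos phi_range phi_distinct])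
  have P5: "\<forall>i<s. (\<lambda>n. spec_norm (Pi_blk (U n) j i - proj_colspace (col_block (Bmat (N n) D r phi) j i)))
        \<longlonglongrightarrow> 0"
    by (rule part5[OF N_le N_lim c_pos D_pos phi_range phi_distinct S_carrier S_bound \<omega>_pos \<omega>_decr j_sum svd \<sigma>_lim])
  show ?thesis using P14 P5 by blast
qed

end
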